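(* Let $\mathfrak H$ be a Hilbert space and $F(\lambda)$, $\lambda\in(\sigma,\tau)\subseteq\mathbb R$, an operator function satisfying the standing assumptions (A1)–(A3) below. Then for every half-open interval $[\xi_1,\xi_2)$ with $[\xi_1,\xi_2]\subset(\sigma,\tau)$, \[ \mathcal N_F(\xi_1,\xi_2)\geqslant \nu_F(\xi_2)-\nu_F(\xi_1). \]
   Context: Standing assumptions on $F$: (A1) for every $\lambda_0\in(\sigma,\tau)$, $F(\lambda_0)$ is a self-adjoint operator in $\mathfrak H$ with compact resolvent; (A2) for every $\lambda_0\in(\sigma,\tau)$ there exist a real $\mu$ and a neighbourhood $\mathcal U(\lambda_0)$ with compact closure in $(\sigma,\tau)$ such that $F(\lambda_1)-\mu\geqslant 0$ for all $\lambda_1\in\mathcal U(\lambda_0)$; (A3) $\lambda\mapsto (F(\lambda)-i)^{-1}$ is continuous on $(\sigma,\tau)$ in the operator norm. A number $\lambda_0\in(\sigma,\tau)$ is an eigenvalue of multiplicity $m$ of $F$ if $0$ is an eigenvalue of multiplicity $m$ of $F(\lambda_0)$. $\mathcal N_F(\xi_1,\xi_2)$ denotes the number of eigenvalues of $F$ in $[\xi_1,\xi_2)$ counted with multiplicity, and $\nu_F(\lambda_0)$ denotes the number of negative eigenvalues of $F(\lambda_0)$ counted with multiplicity. *)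

theory Defs
  imports "HOL-Analysis.Analysis"
begin

class complex_inner = real_normed_vector +
  fixes scaleC :: "complex \<Rightarrow> 'a \<Rightarrow> 'a" (infixr \<open>*\<^sub>C\<close> 75)
    and cinner :: "'a \<Rightarrow> 'a \<Rightarrow> complex"
  assumes scaleC_add_right: "a *\<^sub>C (x + y) = a *\<^sub>C x + a *\<^sub>C y"
    and scaleC_add_left: "(a + b) *\<^sub>C x = a *\<^sub>C x + b *\<^sub>C x"
    and scaleC_scaleC: "a *\<^sub>C (b *\<^sub>C x) = (a * b) *\<^sub>C x"
    and scaleC_one: "1 *\<^sub>C x = x"
    and scaleR_scaleC: "scaleR r x = complex_of_real r *\<^sub>C x"
    and cinner_add_left: "cinner (x + y) z = cinner x z + cinner y z"
    and cinner_scaleC_left: "cinner (a *\<^sub>C x) y = cnj a * cinner x y"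
    and cinner_commute: "cinner x y = cnj (cinner y x)"
    and cinner_ge_zero: "0 \<le> Re (cinner x x)"
    and cinner_eq_zero_iff: "cinner x x = 0 \<longleftrightarrow> x = 0"
    and norm_eq_sqrt_cinner: "norm x = sqrt (Re (cinner x x))"

class chilbert_space = complex_inner + complete_space

text \<open>An operator in \<open>\<HH>\<close> is a pair (domain, action).\<close>
type_synonym 'a op = "'a set \<times> ('a \<Rightarrow> 'a)"

definition csubspace :: "'a::complex_inner set \<Rightarrow> bool" where
  "csubspace S \<longleftrightarrow> 0 \<in> S \<and> (\<forall>x\<in>S. \<forall>y\<in>S. x + y \<in> S) \<and> (\<forall>c. \<forall>x\<in>S. c *\<^sub>C x \<in> S)"

definition linear_op :: "'a::complex_inner op \<Rightarrow> bool" where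
  "linear_op A \<longleftrightarrow> csubspace (fst A) \<and>
     (\<forall>x\<in>fst A. \<forall>y\<in>fst A. snd A (x + y) = snd A x + snd A y) \<and>
     (\<forall>c. \<forall>x\<in>fst A. snd A (c *\<^sub>C x) = c *\<^sub>C snd A x)"

definition adjoint_domain :: "'a::complex_inner op \<Rightarrow> 'a set" where
  "adjoint_domain A = {y. \<exists>z. \<forall>x\<in>fst A. cinner (snd A x) y = cinner x z}"

text \<open>Self-adjoint: densely defined, symmetric, and \<open>dom A* = dom A\<close> (hence \<open>A* = A\<close>).\<close>
definition self_adjoint :: "'a::complex_inner op \<Rightarrow> bool" where
  "self_adjoint A \<longleftrightarrow> linear_op A \<and> closure (fst A) = UNIV \<and>
     (\<forall>x\<in>fst A. \<forall>y\<in>fst A. cinner (snd A x) y = cinner x (snd A y)) \<and>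
     adjoint_domain A = fst A"

definition resolvent_bij :: "'a::complex_inner op \<Rightarrow> complex \<Rightarrow> bool" where
  "resolvent_bij A z \<longleftrightarrow> (\<forall>y. \<exists>!x. x \<in> fst A \<and> snd A x - z *\<^sub>C x = y)"

definition resolvent :: "'a::complex_inner op \<Rightarrow> complex \<Rightarrow> 'a \<Rightarrow> 'a" where
  "resolvent A z = (\<lambda>y. THE x. x \<in> fst A \<and> snd A x - z *\<^sub>C x = y)"

definition compact_op :: "('a::real_normed_vector \<Rightarrow> 'a) \<Rightarrow> bool" where
  "compact_op R \<longleftrightarrow> compact (closure (R ` cball 0 1))"

definition compact_resolvent :: "'a::complex_inner op \<Rightarrow> bool" where
  "compact_resolvent A \<longleftrightarrow> resolvent_bij A \<i> \<and> compact_op (resolvent A \<i>)"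

definition op_ge :: "'a::complex_inner op \<Rightarrow> real \<Rightarrow> bool" where
  "op_ge A \<mu> \<longleftrightarrow> (\<forall>x\<in>fst A. 0 \<le> Re (cinner x (snd A x - complex_of_real \<mu> *\<^sub>C x)))"

definition eigenspace :: "'a::complex_inner op \<Rightarrow> complex \<Rightarrow> 'a set" where
  "eigenspace A \<mu> = {x \<in> fst A. snd A x = \<mu> *\<^sub>C x}"

definition is_eigenvalue :: "'a::complex_inner op \<Rightarrow> complex \<Rightarrow> bool" where
  "is_eigenvalue A \<mu> \<longleftrightarrow> eigenspace A \<mu> \<noteq> {0}"

definition multiplicity_ev :: "'a::complex_inner op \<Rightarrow> complex \<Rightarrow> nat" where
  "multiplicity_ev A \<mu> = vector_space.dim scaleC (eigenspace A \<mu>)"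

definition ointerval :: "ereal \<Rightarrow> ereal \<Rightarrow> real set" where
  "ointerval \<sigma> \<tau> = {l. \<sigma> < ereal l \<and> ereal l < \<tau>}"

definition standing_assumptions ::
  "ereal \<Rightarrow> ereal \<Rightarrow> (real \<Rightarrow> 'a::chilbert_space op) \<Rightarrow> bool" where
  "standing_assumptions \<sigma> \<tau> F \<longleftrightarrow>
     \<comment> \<open>(A1)\<close>
     (\<forall>l0\<in>ointerval \<sigma> \<tau>. self_adjoint (F l0) \<and> compact_resolvent (F l0)) \<and>
     \<comment> \<open>(A2)\<close>
     (\<forall>l0\<in>ointerval \<sigma> \<tau>. \<exists>\<mu>::real. \<exists>U. open U \<and> l0 \<in> U \<and> compact (closure U) \<and>
         closure U \<subseteq> ointerval \<sigma> \<tau> \<and> (\<forall>l1\<in>U. op_ge (F l1) \<mu>)) \<and>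
     \<comment> \<open>(A3)\<close>
     (\<forall>l0\<in>ointerval \<sigma> \<tau>.
        ((\<lambda>l. onorm (\<lambda>x. resolvent (F l) \<i> x - resolvent (F l0) \<i> x)) \<longlongrightarrow> 0)
          (at l0 within ointerval \<sigma> \<tau>))"

text \<open>\<open>l0\<close> is an eigenvalue of \<open>F\<close> iff \<open>0\<close> is an eigenvalue of \<open>F(l0)\<close>,
  with multiplicity that of \<open>0\<close>.\<close>
definition ev_F :: "(real \<Rightarrow> 'a::complex_inner op) \<Rightarrow> real \<Rightarrow> bool" where
  "ev_F F l0 \<longleftrightarrow> is_eigenvalue (F l0) 0"

definition N_F :: "(real \<Rightarrow> 'a::complex_inner op) \<Rightarrow> real \<Rightarrow> real \<Rightarrow> enat" where
  "N_F F \<xi>1 \<xi>2 = (let E = {l\<in>{\<xi>1..<\<xi>2}. ev_F F l} in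
     if finite E then enat (\<Sum>l\<in>E. multiplicity_ev (F l) 0) else \<infinity>)"

text \<open>Number of negative eigenvalues of \<open>F(l0)\<close> with multiplicity
  (finite under the standing assumptions).\<close>
definition nu_F :: "(real \<Rightarrow> 'a::complex_inner op) \<Rightarrow> real \<Rightarrow> nat" where
  "nu_F F l0 = (\<Sum>\<mu>\<in>{\<mu>::real. \<mu> < 0 \<and> is_eigenvalue (F l0) (complex_of_real \<mu>)}.
                   multiplicity_ev (F l0) (complex_of_real \<mu>))"

end

theory Submission
  imports Defs
begin

interpretation cvs: vector_space "scaleC :: complex \<Rightarrow> 'a::complex_inner \<Rightarrow> 'a"
  by unfold_locales (auto simp: scaleC_add_right scaleC_add_left scaleC_scaleC scaleC_one)

lemma cinner_add_right: "cinner x (y + z) = cinner x y + cinner x z"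
  by (subst (1 2 3) cinner_commute) (simp add: cinner_add_left)
lemma cinner_scaleC_right: "cinner x (a *\<^sub>C y) = a * cinner x y"
  by (subst (1 2) cinner_commute) (simp add: cinner_scaleC_left)
lemma cinner_zero_left[simp]: "cinner 0 x = 0"
  using cinner_add_left[of 0 0 x] by simp
lemma cinner_zero_right[simp]: "cinner x 0 = 0"
  using cinner_add_right[of x 0 0] by simp
lemma cinner_minus_left: "cinner (- x) y = - cinner x y"
  using cinner_add_left[of x "-x" y] by (simp add: eq_neg_iff_add_eq_0 add.commute)
lemma cinner_minus_right: "cinner x (- y) = - cinner x y"
  using cinner_add_right[of x y "-y"] by (simp add: eq_neg_iff_add_eq_0 add.commute)
lemma cinner_diff_left: "cinner (x - y) z = cinner x z - cinner y z"
  using cinner_add_left[of x "-y" z] by (simp add: cinner_minus_left)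
lemma cinner_diff_right: "cinner x (y - z) = cinner x y - cinner x z"
  using cinner_add_right[of x y "-z"] by (simp add: cinner_minus_right)
lemma cinner_sum_left: "cinner (\<Sum>i\<in>I. f i) y = (\<Sum>i\<in>I. cinner (f i) y)"
  by (induction I rule: infinite_finite_induct) (auto simp: cinner_add_left)
lemma cinner_sum_right: "cinner y (\<Sum>i\<in>I. f i) = (\<Sum>i\<in>I. cinner y (f i))"
  by (induction I rule: infinite_finite_induct) (auto simp: cinner_add_right)
lemmas cinner_simps = cinner_add_left cinner_add_right cinner_scaleC_left cinner_scaleC_right
  cinner_minus_left cinner_minus_right cinner_diff_left cinner_diff_right

lemma cinner_self_Im: "Im (cinner x x) = 0"
proof -
  have "cinner x x = cnj (cinner x x)" by (rule cinner_commute)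
  then have "Im (cinner x x) = - Im (cinner x x)" by (metis cnj.simps(2))
  then show ?thesis by simp
qed
lemma cinner_self: "cinner x x = complex_of_real ((norm x)\<^sup>2)"
  using cinner_self_Im[of x] cinner_ge_zero[of x] norm_eq_sqrt_cinner[of x]
  by (simp add: complex_eq_iff)
lemma Re_cinner_self: "Re (cinner x x) = (norm x)\<^sup>2"
  by (simp add: cinner_self)

lemma scaleC_real: "complex_of_real r *\<^sub>C x = r *\<^sub>R x"
  by (simp add: scaleR_scaleC)
lemma scaleC_zero_left[simp]: "0 *\<^sub>C x = 0" by (rule cvs.scale_zero_left)
lemma scaleC_zero_right[simp]: "a *\<^sub>C 0 = 0" by (rule cvs.scale_zero_right)
lemma scaleC_one'[simp]: "1 *\<^sub>C x = x" by (rule scaleC_one)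
lemma scaleC_minus_left: "(- a) *\<^sub>C x = - (a *\<^sub>C x)" by (rule cvs.scale_minus_left)
lemma scaleC_minus_right: "a *\<^sub>C (- x) = - (a *\<^sub>C x)" by (rule cvs.scale_minus_right)
lemma scaleC_diff_left: "(a - b) *\<^sub>C x = a *\<^sub>C x - b *\<^sub>C x" by (rule cvs.scale_left_diff_distrib)
lemma scaleC_diff_right: "a *\<^sub>C (x - y) = a *\<^sub>C x - a *\<^sub>C y" by (rule cvs.scale_right_diff_distrib)
lemma scaleC_sum_right: "a *\<^sub>C (\<Sum>i\<in>I. f i) = (\<Sum>i\<in>I. a *\<^sub>C f i)" by (rule cvs.scale_sum_right)
lemma scaleC_eq_0_iff: "a *\<^sub>C x = 0 \<longleftrightarrow> a = 0 \<or> x = 0" by (rule cvs.scale_eq_0_iff)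

lemma norm_scaleC: "norm (a *\<^sub>C x) = cmod a * norm x"
proof -
  have "(norm (a *\<^sub>C x))\<^sup>2 = (cmod a * norm x)\<^sup>2"
  proof -
    have "complex_of_real ((norm (a *\<^sub>C x))\<^sup>2) = cinner (a *\<^sub>C x) (a *\<^sub>C x)" by (simp add: cinner_self)
    also have "\<dots> = (cnj a * a) * cinner x x" by (simp add: cinner_scaleC_left cinner_scaleC_right)
    also have "cnj a * a = complex_of_real ((cmod a)\<^sup>2)" using complex_norm_square[of a] by (simp add: mult.commute)
    also have "complex_of_real ((cmod a)\<^sup>2) * cinner x x = complex_of_real ((cmod a * norm x)\<^sup>2)"
      by (simp add: cinner_self power_mult_distrib)
    finally show ?thesis using of_real_eq_iff by blast
  qed
  then show ?thesis by (simp add: power2_eq_iff_nonneg)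
qed

lemma cauchy_schwarz_sq: "(cmod (cinner x y))\<^sup>2 \<le> (norm x)\<^sup>2 * (norm y)\<^sup>2"
proof (cases "y = 0")
  case True then show ?thesis by simp
next
  case False
  define N where "N = (norm y)\<^sup>2"
  have N: "N > 0" using False by (simp add: N_def)
  define z where "z = cinner y x"
  have c: "cinner x y = cnj z" unfolding z_def by (rule cinner_commute)
  have yy: "cinner y y = complex_of_real N" by (simp add: cinner_self N_def)
  have m: "cnj z * z = complex_of_real ((cmod z)\<^sup>2)"
    using complex_norm_square[of z] by (simp add: mult.commute)
  define t where "t = z / complex_of_real N"
  have "0 \<le> Re (cinner (x - t *\<^sub>C y) (x - t *\<^sub>C y))" by (rule cinner_ge_zero)
  also have "cinner (x - t *\<^sub>C y) (x - t *\<^sub>C y) =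
      cinner x x - t * cinner x y - cnj t * cinner y x + cnj t * t * cinner y y"
    by (simp add: cinner_simps algebra_simps)
  also have "\<dots> = cinner x x - (cnj z * z) / complex_of_real N"
    unfolding t_def c yy z_def[symmetric] using N by (simp add: field_simps power2_eq_square)
  also have "\<dots> = complex_of_real ((norm x)\<^sup>2 - (cmod z)\<^sup>2 / N)"
    by (simp add: m cinner_self)
  finally have "(cmod z)\<^sup>2 / N \<le> (norm x)\<^sup>2" by simp
  then show ?thesis using N c by (simp add: N_def field_simps)
qed

lemma cauchy_schwarz: "cmod (cinner x y) \<le> norm x * norm y"
proof -
  have "(cmod (cinner x y))\<^sup>2 \<le> (norm x * norm y)\<^sup>2"
    using cauchy_schwarz_sq[of x y] by (simp add: power_mult_distrib)
  then show ?thesis by (rule power2_le_imp_le) simp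
qed

lemma Re_cinner_le: "Re (cinner x y) \<le> norm x * norm y"
  using cauchy_schwarz[of x y] complex_Re_le_cmod[of "cinner x y"] by linarith

lemma norm_add_sq: "(norm (x + y))\<^sup>2 = (norm x)\<^sup>2 + (norm y)\<^sup>2 + 2 * Re (cinner x y)"
proof -
  have "Re (cinner y x) = Re (cinner x y)" by (subst cinner_commute) simp
  then show ?thesis by (simp add: Re_cinner_self[symmetric] cinner_add_left cinner_add_right)
qed

lemma norm_diff_sq: "(norm (x - y))\<^sup>2 = (norm x)\<^sup>2 + (norm y)\<^sup>2 - 2 * Re (cinner x y)"
proof -
  have "Re (cinner y x) = Re (cinner x y)" by (subst cinner_commute) simp
  then show ?thesis by (simp add: Re_cinner_self[symmetric] cinner_diff_left cinner_diff_right)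
qed

lemma continuous_cinner_right: "continuous_on UNIV (\<lambda>x. cinner g x)"
proof (rule continuous_onI)
  fix x and e :: real assume e: "e > 0"
  show "\<exists>d>0. \<forall>x'\<in>UNIV. dist x' x < d \<longrightarrow> dist (cinner g x') (cinner g x) \<le> e"
  proof (intro exI[of _ "e / (norm g + 1)"] conjI ballI impI)
    show "e / (norm g + 1) > 0" using e by (simp add: add_nonneg_pos)
    fix x' assume "dist x' x < e / (norm g + 1)"
    then have d: "norm (x' - x) * (norm g + 1) < e"
      by (simp add: dist_norm pos_less_divide_eq add_nonneg_pos)
    have "dist (cinner g x') (cinner g x) = cmod (cinner g (x' - x))"
      by (simp add: dist_norm cinner_diff_right)
    also have "\<dots> \<le> norm g * norm (x' - x)" by (rule cauchy_schwarz)
    also have "\<dots> \<le> norm (x' - x) * (norm g + 1)" by (simp add: algebra_simps)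
    finally show "dist (cinner g x') (cinner g x) \<le> e" using d by linarith
  qed
qed

lemma tendsto_cinner_right: "(f \<longlongrightarrow> l) F \<Longrightarrow> ((\<lambda>n. cinner g (f n)) \<longlongrightarrow> cinner g l) F"
  using continuous_on_tendsto_compose[OF continuous_cinner_right, of f l F] by simp

lemma closed_orth: "closed {x. \<forall>g\<in>G. cinner g x = 0}"
proof -
  have "{x. \<forall>g\<in>G. cinner g x = 0} = (\<Inter>g\<in>G. (\<lambda>x. cinner g x) -` {0})" by auto
  also have "closed \<dots>"
  proof (intro closed_INT ballI continuous_closed_vimage)
    fix g x show "isCont (cinner g) x"
      using continuous_cinner_right[of g] by (simp add: continuous_on_eq_continuous_at)
  qed simp
  finally show ?thesis .
qed

lemma cinner_self_eq_0: "cinner x x = 0 \<Longrightarrow> x = 0" by (simp add: cinner_eq_zero_iff)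

interpretation cpair: vector_space_pair "scaleC :: complex \<Rightarrow> 'a::complex_inner \<Rightarrow> 'a" "scaleC :: complex \<Rightarrow> 'a \<Rightarrow> 'a"
  by unfold_locales

definition orthonormal :: "'a::complex_inner set \<Rightarrow> bool" where
  "orthonormal E \<longleftrightarrow> (\<forall>e\<in>E. norm e = 1) \<and> (\<forall>e\<in>E. \<forall>f\<in>E. e \<noteq> f \<longrightarrow> cinner e f = 0)"

definition proj :: "'a::complex_inner set \<Rightarrow> 'a \<Rightarrow> 'a" where
  "proj E x = (\<Sum>e\<in>E. cinner e x *\<^sub>C e)"

lemma orthonormal_self: "orthonormal E \<Longrightarrow> e \<in> E \<Longrightarrow> cinner e e = 1"
  unfolding orthonormal_def by (simp add: cinner_self)

lemma cinner_sum_orth: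
  assumes "finite E" "orthonormal E" "w \<in> E"
  shows "cinner w (\<Sum>v\<in>E. u v *\<^sub>C v) = u w"
proof -
  have "cinner w (\<Sum>v\<in>E. u v *\<^sub>C v) = (\<Sum>v\<in>E. u v * cinner w v)"
    by (simp add: cinner_sum_right cinner_scaleC_right)
  also have "\<dots> = u w * cinner w w + (\<Sum>v\<in>E - {w}. u v * cinner w v)"
    using assms by (simp add: sum.remove)
  also have "(\<Sum>v\<in>E - {w}. u v * cinner w v) = 0"
    using assms unfolding orthonormal_def by (intro sum.neutral) auto
  finally show ?thesis using orthonormal_self[OF assms(2,3)] by simp
qed

lemma orthonormal_independent:
  assumes "finite E" "orthonormal E" shows "cvs.independent E"
proof -
  have "\<not> (\<exists>u. (\<exists>v\<in>E. u v \<noteq> 0) \<and> (\<Sum>v\<in>E. u v *\<^sub>C v) = 0)"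
  proof
    assume "\<exists>u. (\<exists>v\<in>E. u v \<noteq> 0) \<and> (\<Sum>v\<in>E. u v *\<^sub>C v) = 0"
    then obtain u v where "v \<in> E" "u v \<noteq> 0" "(\<Sum>v\<in>E. u v *\<^sub>C v) = 0" by blast
    with cinner_sum_orth[OF assms \<open>v \<in> E\<close>, of u] show False by simp
  qed
  then show ?thesis using cvs.dependent_finite[OF assms(1)] by blast
qed

lemma span_orth_expand:
  assumes "finite E" "orthonormal E" "x \<in> cvs.span E"
  shows "x = proj E x"
proof -
  from assms(3) obtain u where x: "x = (\<Sum>v\<in>E. u v *\<^sub>C v)"
    using cvs.span_finite[OF assms(1)] by auto
  have "\<And>e. e \<in> E \<Longrightarrow> cinner e x = u e" unfolding x by (rule cinner_sum_orth[OF assms(1,2)])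
  then show ?thesis unfolding proj_def x by (intro sum.cong) auto
qed

lemma proj_orth:
  assumes "finite E" "orthonormal E" "e \<in> E"
  shows "cinner e (x - proj E x) = 0"
  using cinner_sum_orth[OF assms, of "\<lambda>e. cinner e x"]
  by (simp add: proj_def cinner_diff_right)

lemma orth_span:
  assumes "\<And>e. e \<in> E \<Longrightarrow> cinner e x = 0" "y \<in> cvs.span E"
  shows "cinner y x = 0"
proof -
  have "cvs.subspace {y. cinner y x = 0}"
    unfolding cvs.subspace_def by (auto simp: cinner_add_left cinner_scaleC_left)
  moreover have "E \<subseteq> {y. cinner y x = 0}" using assms(1) by auto
  ultimately show ?thesis using cvs.span_minimal assms(2) by blast
qed

lemma proj_in_span: "finite E \<Longrightarrow> proj E x \<in> cvs.span E"
  unfolding proj_def by (intro cvs.span_sum cvs.span_scale cvs.span_base)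

lemma linear_proj: "Vector_Spaces.linear scaleC scaleC (proj E)"
  unfolding Vector_Spaces.linear_iff
  by (simp add: cvs.vector_space_axioms proj_def cinner_add_right cinner_scaleC_right
       sum.distrib scaleC_add_left scaleC_sum_right scaleC_scaleC)

lemma gs_step:
  assumes fin: "finite E" and on: "orthonormal E" and w: "w \<notin> cvs.span E"
  defines "u \<equiv> w - proj E w"
  shows "u \<noteq> 0" "orthonormal (insert (complex_of_real (1 / norm u) *\<^sub>C u) E)"
    "complex_of_real (1 / norm u) *\<^sub>C u \<notin> E"
    "cvs.span (insert (complex_of_real (1 / norm u) *\<^sub>C u) E) = cvs.span (insert w E)"
proof -
  show u0: "u \<noteq> 0"
  proof
    assume "u = 0"
    then have "w = proj E w" unfolding u_def by simp
    then show False using w proj_in_span[OF fin] by metis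
  qed
  define v where "v = complex_of_real (1 / norm u) *\<^sub>C u"
  have nv: "norm v = 1" using u0 unfolding v_def by (simp add: norm_scaleC norm_divide)
  have ortv: "cinner e v = 0" if "e \<in> E" for e
    unfolding v_def u_def using proj_orth[OF fin on that, of w] by (simp add: cinner_scaleC_right)
  have ortv': "cinner v e = 0" if "e \<in> E" for e
    using ortv[OF that] by (subst cinner_commute) simp
  show vE: "complex_of_real (1 / norm u) *\<^sub>C u \<notin> E"
  proof
    assume "complex_of_real (1 / norm u) *\<^sub>C u \<in> E"
    then have "cinner v v = 0" using ortv unfolding v_def by blast
    then show False using nv by (simp add: cinner_self)
  qed
  show "orthonormal (insert (complex_of_real (1 / norm u) *\<^sub>C u) E)"
    using on nv ortv ortv' unfolding orthonormal_def v_def[symmetric] by auto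
  have vs: "v \<in> cvs.span (insert w E)"
  proof -
    have "proj E w \<in> cvs.span (insert w E)"
      using cvs.span_mono[of E "insert w E"] proj_in_span[OF fin] by blast
    moreover have "w \<in> cvs.span (insert w E)" by (simp add: cvs.span_base)
    ultimately show ?thesis unfolding v_def u_def by (intro cvs.span_scale cvs.span_diff)
  qed
  have ws: "w \<in> cvs.span (insert v E)"
  proof -
    have "w = complex_of_real (norm u) *\<^sub>C v + proj E w"
      using u0 unfolding v_def u_def by (simp add: scaleC_scaleC)
    also have "\<dots> \<in> cvs.span (insert v E)"
    proof -
      have "proj E w \<in> cvs.span (insert v E)"
        using cvs.span_mono[of E "insert v E"] proj_in_span[OF fin] by blast
      moreover have "v \<in> cvs.span (insert v E)" by (simp add: cvs.span_base)
      ultimately show ?thesis by (intro cvs.span_scale cvs.span_add)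
    qed
    finally show ?thesis .
  qed
  show "cvs.span (insert (complex_of_real (1 / norm u) *\<^sub>C u) E) = cvs.span (insert w E)"
    unfolding v_def[symmetric]
  proof
    show "cvs.span (insert v E) \<subseteq> cvs.span (insert w E)"
      using vs by (intro cvs.span_minimal) (auto intro: cvs.span_base)
    show "cvs.span (insert w E) \<subseteq> cvs.span (insert v E)"
      using ws by (intro cvs.span_minimal) (auto intro: cvs.span_base)
  qed
qed

lemma card_le_orth:
  assumes fin: "finite E" and on: "orthonormal E" and I: "cvs.independent I"
    and H: "\<And>x. x \<in> cvs.span I \<Longrightarrow> (\<forall>e\<in>E. cinner e x = 0) \<Longrightarrow> x = 0"
  shows "finite I \<and> card I \<le> card E"
proof -
  have inj: "inj_on (proj E) (cvs.span I)"
  proof (rule inj_onI)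
    fix x y assume xy: "x \<in> cvs.span I" "y \<in> cvs.span I" "proj E x = proj E y"
    have "x - y \<in> cvs.span I" using xy by (intro cvs.span_diff)
    moreover have "\<forall>e\<in>E. cinner e (x - y) = 0"
    proof
      fix e assume e: "e \<in> E"
      have "proj E (x - y) = 0"
        using linear_proj[of E] xy(3) by (simp add: Vector_Spaces.linear_iff) (metis cpair.linear_diff linear_proj right_minus_eq)
      then show "cinner e (x - y) = 0" using proj_orth[OF fin on e, of "x - y"] by simp
    qed
    ultimately show "x = y" using H by fastforce
  qed
  have ind: "cvs.independent (proj E ` I)"
    by (rule cpair.linear_independent_injective_image[OF linear_proj I inj])
  have sub: "proj E ` I \<subseteq> cvs.span E" using proj_in_span[OF fin] by auto
  have "finite (proj E ` I) \<and> card (proj E ` I) \<le> card E"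
    using cvs.independent_span_bound[OF fin ind sub] .
  moreover have "inj_on (proj E) I" using inj cvs.span_superset inj_on_subset by blast
  ultimately show ?thesis using finite_imageD card_image by metis
qed

lemma compact_sep_bound:
  assumes cB: "compact_op B" and e: "\<epsilon> > 0"
  shows "\<exists>N. \<forall>F. F \<subseteq> cball 0 1 \<longrightarrow> (\<forall>x\<in>F. \<forall>y\<in>F. x \<noteq> y \<longrightarrow> \<epsilon> \<le> norm (B x - B y))
            \<longrightarrow> finite F \<and> card F \<le> N"
proof -
  define K where "K = closure (B ` cball 0 1)"
  have cK: "compact K" using cB unfolding compact_op_def K_def .
  have sK: "K \<subseteq> (\<Union>c\<in>K. ball c (\<epsilon>/2))" using e by auto
  obtain C where C: "C \<subseteq> K" "finite C" "K \<subseteq> (\<Union>c\<in>C. ball c (\<epsilon>/2))"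
    using compactE_image[OF cK _ sK] by auto
  show ?thesis
  proof (intro exI[of _ "card C"] allI impI)
    fix F assume F: "F \<subseteq> cball 0 1" and sep: "\<forall>x\<in>F. \<forall>y\<in>F. x \<noteq> y \<longrightarrow> \<epsilon> \<le> norm (B x - B y)"
    have "\<forall>x\<in>F. \<exists>c\<in>C. B x \<in> ball c (\<epsilon>/2)"
    proof
      fix x assume "x \<in> F"
      then have "B x \<in> K" unfolding K_def using F closure_subset by blast
      then show "\<exists>c\<in>C. B x \<in> ball c (\<epsilon>/2)" using C(3) by blast
    qed
    then obtain c where c: "\<And>x. x \<in> F \<Longrightarrow> c x \<in> C \<and> B x \<in> ball (c x) (\<epsilon>/2)" by metis
    have inj: "inj_on c F"
    proof (rule inj_onI, rule ccontr)
      fix x y assume xy: "x \<in> F" "y \<in> F" "c x = c y" "x \<noteq> y"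
      have "dist (B x) (B y) \<le> dist (B x) (c x) + dist (B y) (c y)"
        using xy(3) dist_triangle2[of "B x" "B y" "c x"] by simp
      also have "\<dots> < \<epsilon>" using c[OF xy(1)] c[OF xy(2)] by (simp add: dist_commute)
      finally have "norm (B x - B y) < \<epsilon>" by (simp add: dist_norm)
      moreover have "\<epsilon> \<le> norm (B x - B y)" using sep xy by blast
      ultimately show False by linarith
    qed
    have "c ` F \<subseteq> C" using c by auto
    then have "finite (c ` F)" using C(2) finite_subset by blast
    then have "finite F" using inj finite_imageD by blast
    then show "finite F \<and> card F \<le> card C"
      using card_inj_on_le[OF inj \<open>c ` F \<subseteq> C\<close> C(2)] by simp
  qed
qed

lemma orthonormal_norm_diff:
  assumes "orthonormal F" "x \<in> F" "y \<in> F" "x \<noteq> y"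
  shows "norm (x - y) = sqrt 2"
proof -
  have "(norm (x - y))\<^sup>2 = 2" using assms unfolding orthonormal_def by (simp add: norm_diff_sq)
  then show ?thesis by (metis norm_ge_zero real_sqrt_unique)
qed

lemma max_orthonormal:
  assumes W: "cvs.subspace W"
    and bnd: "\<And>F. F \<subseteq> W \<Longrightarrow> finite F \<Longrightarrow> orthonormal F \<Longrightarrow> card F \<le> N"
  shows "\<exists>E. finite E \<and> orthonormal E \<and> E \<subseteq> W \<and> cvs.span E = W"
proof -
  define Cs where "Cs = {card F | F. F \<subseteq> W \<and> finite F \<and> orthonormal F}"
  have "0 \<in> Cs" unfolding Cs_def orthonormal_def by (intro CollectI exI[of _ "{}"]) auto
  moreover have "\<forall>n\<in>Cs. n \<le> N" using bnd unfolding Cs_def by auto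
  ultimately have fC: "finite Cs" using finite_subset[of Cs "{..N}"] by auto
  then have "Max Cs \<in> Cs" using Max_in \<open>0 \<in> Cs\<close> by blast
  then obtain E where E: "E \<subseteq> W" "finite E" "orthonormal E" "card E = Max Cs"
    unfolding Cs_def by auto
  have "W \<subseteq> cvs.span E"
  proof
    fix w assume w: "w \<in> W"
    show "w \<in> cvs.span E"
    proof (rule ccontr)
      assume nw: "w \<notin> cvs.span E"
      define u where "u = w - proj E w"
      note g = gs_step[OF E(2) E(3) nw]
      define v where "v = complex_of_real (1 / norm u) *\<^sub>C u"
      have "v \<in> cvs.span (insert v E)" by (rule cvs.span_base) simp
      then have "v \<in> cvs.span (insert w E)" using g(4) unfolding v_def u_def by simp
      also have "cvs.span (insert w E) \<subseteq> W" using W w E(1) by (intro cvs.span_minimal) auto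
      finally have vW: "v \<in> W" .
      have "insert v E \<subseteq> W \<and> finite (insert v E) \<and> orthonormal (insert v E)"
        using vW E g(2) unfolding v_def u_def by simp
      then have "card (insert v E) \<in> Cs" unfolding Cs_def by blast
      moreover have "card (insert v E) = Suc (card E)" using g(3) E(2) unfolding v_def u_def by simp
      ultimately have "Suc (card E) \<le> Max Cs" using fC Max_ge by metis
      then show False using E(4) by simp
    qed
  qed
  moreover have "cvs.span E \<subseteq> W" using W E(1) by (intro cvs.span_minimal)
  ultimately show ?thesis using E by blast
qed

lemma cinner_scaleR_left: "cinner (r *\<^sub>R x) y = complex_of_real r * cinner x y"
  by (simp add: scaleR_scaleC cinner_scaleC_left)
lemma cinner_scaleR_right: "cinner x (r *\<^sub>R y) = complex_of_real r * cinner x y"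
  by (simp add: scaleR_scaleC cinner_scaleC_right)

locale cspos =
  fixes B :: "'a::chilbert_space \<Rightarrow> 'a" and K :: real
  assumes lin: "Vector_Spaces.linear scaleC scaleC B"
    and bnd: "\<And>x. norm (B x) \<le> K * norm x"
    and sym: "\<And>x y. cinner (B x) y = cinner x (B y)"
    and pos: "\<And>x. 0 \<le> Re (cinner (B x) x)"
    and cpt: "compact_op B"
    and Kpos: "K > 0"
begin

lemma B_add: "B (x + y) = B x + B y" using cpair.linear_add[OF lin] .
lemma B_diff: "B (x - y) = B x - B y" using cpair.linear_diff[OF lin] .
lemma B_scaleC: "B (a *\<^sub>C x) = a *\<^sub>C B x" using cpair.linear_scale[OF lin] .
lemma B_scaleR: "B (r *\<^sub>R x) = r *\<^sub>R B x" by (simp add: scaleR_scaleC B_scaleC)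
lemma B_sum: "B (\<Sum>i\<in>I. f i) = (\<Sum>i\<in>I. B (f i))" using cpair.linear_sum[OF lin] .
lemma B_zero[simp]: "B 0 = 0" using cpair.linear_0[OF lin] .

lemma bl: "bounded_linear B"
  by (rule bounded_linear_intro[of _ K]) (auto simp: B_add B_scaleR bnd mult.commute)

definition espace :: "real \<Rightarrow> 'a set" where
  "espace s = {x. B x = s *\<^sub>R x}"

lemma espace_subspace: "cvs.subspace (espace s)"
  unfolding cvs.subspace_def espace_def
  by (auto simp: B_add B_scaleC scaleR_add_right scaleR_scaleC scaleC_scaleC mult.commute scaleC_add_right)

lemma espace_zero[simp]: "0 \<in> espace s" unfolding espace_def by simp

lemma eig_orth:
  assumes "x \<in> espace s" "y \<in> espace t" "s \<noteq> t"
  shows "cinner x y = 0"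
proof -
  have "cinner (B x) y = cinner x (B y)" by (rule sym)
  then have "complex_of_real s * cinner x y = complex_of_real t * cinner x y"
    using assms(1,2) unfolding espace_def by (simp add: cinner_scaleR_left cinner_scaleR_right)
  then show ?thesis using assms(3) by simp
qed

lemma espace_fin:
  assumes s: "s > 0"
  shows "\<exists>E. finite E \<and> orthonormal E \<and> E \<subseteq> espace s \<and> cvs.span E = espace s"
proof -
  obtain N where N: "\<And>F. F \<subseteq> cball 0 1 \<Longrightarrow> (\<forall>x\<in>F. \<forall>y\<in>F. x \<noteq> y \<longrightarrow> s \<le> norm (B x - B y))
            \<Longrightarrow> finite F \<and> card F \<le> N"
    using compact_sep_bound[OF cpt s] by blast
  have cF: "card F \<le> N" if F: "F \<subseteq> espace s" "finite F" "orthonormal F" for F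
  proof -
    have F1: "F \<subseteq> cball 0 1" using F(3) unfolding orthonormal_def by auto
    have F2: "s \<le> norm (B x - B y)" if "x \<in> F" "y \<in> F" "x \<noteq> y" for x y
    proof -
      have "B x = s *\<^sub>R x" "B y = s *\<^sub>R y" using F(1) that unfolding espace_def by auto
      then have "B x - B y = s *\<^sub>R (x - y)" by (simp add: scaleR_diff_right)
      then have "norm (B x - B y) = s * sqrt 2"
        using orthonormal_norm_diff[OF F(3) that] s by simp
      moreover have "s \<le> s * sqrt 2" using s by simp
      ultimately show ?thesis by simp
    qed
    show ?thesis using N[OF F1] F2 by blast
  qed
  show ?thesis by (rule max_orthonormal[OF espace_subspace cF])
qed

lemma espace_dim:
  assumes "finite E" "orthonormal E" "cvs.span E = espace s"
  shows "cvs.dim (espace s) = card E"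
proof -
  have "cvs.span (espace s) = espace s" using espace_subspace[of s] by simp
  then have "cvs.span E = cvs.span (espace s)" using assms(3) by (simp only:)
  then show ?thesis by (rule cvs.dim_eq_card[OF _ orthonormal_independent[OF assms(1,2)]])
qed

lemma eig_finite:
  assumes c: "c > 0"
  shows "finite {s. c \<le> s \<and> espace s \<noteq> {0}}"
proof -
  define S where "S = {s. c \<le> s \<and> espace s \<noteq> {0}}"
  have "\<forall>s\<in>S. \<exists>u. u \<in> espace s \<and> norm u = 1"
  proof
    fix s assume "s \<in> S"
    then obtain x where x: "x \<in> espace s" "x \<noteq> 0" unfolding S_def using espace_zero by blast
    have "(1 / norm x) *\<^sub>R x \<in> espace s" using x(1) espace_subspace
      by (simp add: scaleR_scaleC cvs.subspace_scale)
    then show "\<exists>u. u \<in> espace s \<and> norm u = 1" using x(2) by (intro exI) auto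
  qed
  from bchoice[OF this] obtain u where u0: "\<forall>s\<in>S. u s \<in> espace s \<and> norm (u s) = 1" by blast
  then have u: "\<And>s. s \<in> S \<Longrightarrow> u s \<in> espace s \<and> norm (u s) = 1" by blast
  have ortho: "cinner (u s) (u t) = 0" if "s \<in> S" "t \<in> S" "s \<noteq> t" for s t
    using eig_orth[of "u s" s "u t" t] u[OF that(1)] u[OF that(2)] that(3) by blast
  have inj: "inj_on u S"
  proof (rule inj_onI, rule ccontr)
    fix s t assume st: "s \<in> S" "t \<in> S" "u s = u t" "s \<noteq> t"
    have "cinner (u s) (u t) = 0" using ortho st(1,2,4) by blast
    then have "cinner (u s) (u s) = 0" using st(3) by simp
    then have "u s = 0" by (rule cinner_self_eq_0)
    then show False using u[OF st(1)] by simp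
  qed
  obtain N where N: "\<And>F. F \<subseteq> cball 0 1 \<Longrightarrow> (\<forall>x\<in>F. \<forall>y\<in>F. x \<noteq> y \<longrightarrow> c \<le> norm (B x - B y))
            \<Longrightarrow> finite F \<and> card F \<le> N"
    using compact_sep_bound[OF cpt c] by blast
  have F1: "u ` S \<subseteq> cball 0 1" using u by auto
  have F2: "c \<le> norm (B x - B y)" if xy: "x \<in> u ` S" "y \<in> u ` S" "x \<noteq> y" for x y
  proof -
    obtain s t where st: "s \<in> S" "t \<in> S" "x = u s" "y = u t" using xy by blast
    have "s \<noteq> t" using xy(3) st(3,4) by blast
    have Bx: "B x = s *\<^sub>R x" and By: "B y = t *\<^sub>R y" using u st unfolding espace_def by auto
    have xy: "cinner x y = 0" using ortho st \<open>s \<noteq> t\<close> by simp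
    have nx: "norm x = 1" "norm y = 1" using u st by auto
    have "(norm (B x - B y))\<^sup>2 = (norm (s *\<^sub>R x - t *\<^sub>R y))\<^sup>2" by (simp add: Bx By)
    also have "\<dots> = s\<^sup>2 + t\<^sup>2"
      using nx xy by (simp add: norm_diff_sq cinner_scaleR_left cinner_scaleR_right power_mult_distrib)
    also have "\<dots> \<ge> c\<^sup>2"
    proof -
      have "c\<^sup>2 \<le> s\<^sup>2" using st c unfolding S_def by (intro power_mono) auto
      moreover have "0 \<le> t\<^sup>2" by simp
      ultimately show ?thesis by linarith
    qed
    finally show ?thesis by (rule power2_le_imp_le) simp
  qed
  have "finite (u ` S)" using N[OF F1] F2 by blast
  then have "finite S" using inj finite_imageD by blast
  then show ?thesis unfolding S_def .
qed

end

context cspos begin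

lemma union_basis:
  assumes T: "finite T" "\<forall>s\<in>T. s > 0"
  shows "\<exists>E. finite E \<and> orthonormal E \<and> card E = (\<Sum>s\<in>T. cvs.dim (espace s))
     \<and> cvs.span E = cvs.span (\<Union>s\<in>T. espace s) \<and> (\<forall>e\<in>E. \<exists>s\<in>T. B e = s *\<^sub>R e)"
proof -
  have "\<forall>s\<in>T. \<exists>E. finite E \<and> orthonormal E \<and> E \<subseteq> espace s \<and> cvs.span E = espace s"
    using espace_fin T(2) by blast
  from bchoice[OF this] obtain f where
    f: "\<forall>s\<in>T. finite (f s) \<and> orthonormal (f s) \<and> f s \<subseteq> espace s \<and> cvs.span (f s) = espace s"
    by blast
  define E where "E = (\<Union>s\<in>T. f s)"
  have fin: "finite E" unfolding E_def using T(1) f by blast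
  have dis: "f s \<inter> f t = {}" if st: "s \<in> T" "t \<in> T" "s \<noteq> t" for s t
  proof (rule ccontr)
    assume "f s \<inter> f t \<noteq> {}"
    then obtain e where e: "e \<in> f s" "e \<in> f t" by blast
    have "e \<in> espace s" "e \<in> espace t" using e f st by blast+
    then have "cinner e e = 0" using eig_orth st(3) by blast
    then have "e = 0" by (rule cinner_self_eq_0)
    moreover have "norm e = 1" using f st e unfolding orthonormal_def by blast
    ultimately show False by simp
  qed
  have on: "orthonormal E"
    unfolding orthonormal_def
  proof (intro conjI ballI impI)
    fix e assume "e \<in> E"
    then obtain s where "s \<in> T" "e \<in> f s" unfolding E_def by blast
    then show "norm e = 1" using f unfolding orthonormal_def by blast
  next
    fix e e' assume ee: "e \<in> E" "e' \<in> E" "e \<noteq> e'"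
    then obtain s t where st: "s \<in> T" "e \<in> f s" "t \<in> T" "e' \<in> f t" unfolding E_def by blast
    show "cinner e e' = 0"
    proof (cases "s = t")
      case True
      then have "orthonormal (f s)" "e' \<in> f s" using st f by auto
      then show ?thesis using st(2) ee(3) unfolding orthonormal_def by blast
    next
      case False
      have "e \<in> espace s" "e' \<in> espace t" using st f by blast+
      then show ?thesis using eig_orth False by blast
    qed
  qed
  have card: "card E = (\<Sum>s\<in>T. cvs.dim (espace s))"
  proof -
    have "card E = (\<Sum>s\<in>T. card (f s))"
      unfolding E_def using T(1) f dis by (intro card_UN_disjoint) auto
    also have "\<dots> = (\<Sum>s\<in>T. cvs.dim (espace s))"
    proof (intro sum.cong refl)
      fix s assume "s \<in> T"
      then show "card (f s) = cvs.dim (espace s)" using f espace_dim[of "f s" s] by simp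
    qed
    finally show ?thesis .
  qed
  have span: "cvs.span E = cvs.span (\<Union>s\<in>T. espace s)"
  proof
    show "cvs.span E \<subseteq> cvs.span (\<Union>s\<in>T. espace s)"
      unfolding E_def using f by (intro cvs.span_mono) blast
    have "(\<Union>s\<in>T. espace s) \<subseteq> cvs.span E"
    proof
      fix x assume "x \<in> (\<Union>s\<in>T. espace s)"
      then obtain s where s: "s \<in> T" "x \<in> espace s" by blast
      then have "x \<in> cvs.span (f s)" using f by simp
      moreover have "f s \<subseteq> E" unfolding E_def using s by blast
      ultimately show "x \<in> cvs.span E" using cvs.span_mono by blast
    qed
    then show "cvs.span (\<Union>s\<in>T. espace s) \<subseteq> cvs.span E"
      by (intro cvs.span_minimal) auto
  qed
  have eig: "\<forall>e\<in>E. \<exists>s\<in>T. B e = s *\<^sub>R e"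
  proof
    fix e assume "e \<in> E"
    then obtain s where "s \<in> T" "e \<in> f s" unfolding E_def by blast
    then show "\<exists>s\<in>T. B e = s *\<^sub>R e" using f unfolding espace_def by blast
  qed
  show ?thesis using fin on card span eig by blast
qed

lemma rayleigh_lower:
  assumes fin: "finite E" and on: "orthonormal E" and ev: "\<forall>e\<in>E. \<exists>s. d \<le> s \<and> B e = s *\<^sub>R e"
    and x: "x \<in> cvs.span E"
  shows "d * (norm x)\<^sup>2 \<le> Re (cinner (B x) x)"
proof -
  from bchoice[OF ev] obtain sv where sv: "\<forall>e\<in>E. d \<le> sv e \<and> B e = sv e *\<^sub>R e" by blast
  define a where "a e = cinner e x" for e
  have xe: "x = (\<Sum>e\<in>E. a e *\<^sub>C e)"
    using span_orth_expand[OF fin on x] unfolding proj_def a_def .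
  have Bx: "B x = (\<Sum>e\<in>E. (a e * complex_of_real (sv e)) *\<^sub>C e)"
  proof -
    have "B x = (\<Sum>e\<in>E. a e *\<^sub>C B e)" by (subst xe) (simp add: B_sum B_scaleC)
    also have "\<dots> = (\<Sum>e\<in>E. (a e * complex_of_real (sv e)) *\<^sub>C e)"
      using sv by (intro sum.cong refl) (simp add: scaleR_scaleC scaleC_scaleC)
    finally show ?thesis .
  qed
  have sq: "cnj (a e) * a e = complex_of_real ((cmod (a e))\<^sup>2)" for e
    using complex_norm_square[of "a e"] by (simp add: mult.commute)
  have "cinner (B x) x = (\<Sum>e\<in>E. cnj (a e * complex_of_real (sv e)) * cinner e x)"
    unfolding Bx by (simp add: cinner_sum_left cinner_scaleC_left)
  also have "\<dots> = (\<Sum>e\<in>E. complex_of_real (sv e * (cmod (a e))\<^sup>2))"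
  proof (intro sum.cong refl)
    fix e
    have "cnj (a e * complex_of_real (sv e)) * cinner e x = complex_of_real (sv e) * (cnj (a e) * a e)"
      by (simp add: a_def)
    also have "\<dots> = complex_of_real (sv e * (cmod (a e))\<^sup>2)" by (simp add: sq)
    finally show "cnj (a e * complex_of_real (sv e)) * cinner e x = complex_of_real (sv e * (cmod (a e))\<^sup>2)" .
  qed
  finally have Bxx: "Re (cinner (B x) x) = (\<Sum>e\<in>E. sv e * (cmod (a e))\<^sup>2)" by (simp add: Re_sum)
  have "cinner x x = cinner (\<Sum>e\<in>E. a e *\<^sub>C e) x" using xe by (rule arg_cong)
  also have "\<dots> = (\<Sum>e\<in>E. cnj (a e) * cinner e x)" by (simp add: cinner_sum_left cinner_scaleC_left)
  also have "\<dots> = (\<Sum>e\<in>E. complex_of_real ((cmod (a e))\<^sup>2))"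
    by (intro sum.cong refl) (simp add: a_def[symmetric] sq)
  finally have xx: "(norm x)\<^sup>2 = (\<Sum>e\<in>E. (cmod (a e))\<^sup>2)"
    using Re_cinner_self[of x] by (simp add: Re_sum)
  have "d * (norm x)\<^sup>2 = (\<Sum>e\<in>E. d * (cmod (a e))\<^sup>2)" by (simp add: xx sum_distrib_left)
  also have "\<dots> \<le> (\<Sum>e\<in>E. sv e * (cmod (a e))\<^sup>2)"
    using sv by (intro sum_mono mult_right_mono) auto
  finally show ?thesis using Bxx by simp
qed

end

context cspos begin

definition rq :: "'a \<Rightarrow> real" where "rq x = Re (cinner (B x) x)"

lemma rq_scale: "rq (r *\<^sub>R x) = r\<^sup>2 * rq x"
  unfolding rq_def by (simp add: B_scaleR cinner_scaleR_left cinner_scaleR_right power2_eq_square)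

lemma rq_zero[simp]: "rq 0 = 0" unfolding rq_def by simp

lemma rq_le: "rq x \<le> K * (norm x)\<^sup>2"
proof -
  have "rq x \<le> norm (B x) * norm x" unfolding rq_def by (rule Re_cinner_le)
  also have "\<dots> \<le> K * norm x * norm x" by (intro mult_right_mono bnd) simp
  finally show ?thesis by (simp add: power2_eq_square mult.assoc)
qed

lemma attain:
  assumes Vdef: "V = {x. \<forall>g\<in>G. cinner g x = 0}"
    and inv: "\<And>x. x \<in> V \<Longrightarrow> B x \<in> V"
    and x1: "x1 \<in> V" "0 < rq x1"
  shows "\<exists>s>0. \<exists>x0\<in>V. norm x0 = 1 \<and> B x0 = s *\<^sub>R x0 \<and> (\<forall>x\<in>V. rq x \<le> s * (norm x)\<^sup>2)"
proof -
  have Vsub: "cvs.subspace V"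
    unfolding Vdef cvs.subspace_def by (auto simp: cinner_add_right cinner_scaleC_right)
  have Vdiff: "x - y \<in> V" if "x \<in> V" "y \<in> V" for x y using Vsub that by (rule cvs.subspace_diff)
  have VscR: "r *\<^sub>R x \<in> V" if "x \<in> V" for x r
    using Vsub that by (simp add: scaleR_scaleC cvs.subspace_scale)
  have Vcl: "closed V" unfolding Vdef by (rule closed_orth)
  define Q where "Q = rq ` {x\<in>V. norm x = 1}"
  have x10: "x1 \<noteq> 0" using x1 by auto
  define u1 where "u1 = (1 / norm x1) *\<^sub>R x1"
  have u1: "u1 \<in> V" "norm u1 = 1" using x10 x1 unfolding u1_def by (auto intro: VscR)
  have "rq u1 = (1 / norm x1)\<^sup>2 * rq x1" unfolding u1_def by (rule rq_scale)
  then have rqu1: "rq u1 > 0" using x1 x10 by simp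
  have Qne: "Q \<noteq> {}" using u1 unfolding Q_def by blast
  have Qbd: "bdd_above Q"
  proof (rule bdd_aboveI)
    fix q assume "q \<in> Q"
    then obtain x where "x \<in> V" "norm x = 1" "q = rq x" unfolding Q_def by blast
    then show "q \<le> K" using rq_le[of x] by simp
  qed
  define s where "s = Sup Q"
  have spos: "s > 0"
  proof -
    have "rq u1 \<in> Q" using u1 unfolding Q_def by blast
    then have "rq u1 \<le> s" unfolding s_def using Qbd by (rule cSup_upper)
    then show ?thesis using rqu1 by linarith
  qed
  have bound: "rq x \<le> s * (norm x)\<^sup>2" if x: "x \<in> V" for x
  proof (cases "x = 0")
    case True then show ?thesis by simp
  next
    case False
    define u where "u = (1 / norm x) *\<^sub>R x"
    have "u \<in> V" "norm u = 1" using x False unfolding u_def by (auto intro: VscR)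
    then have "rq u \<in> Q" unfolding Q_def by blast
    then have "rq u \<le> s" unfolding s_def using Qbd by (rule cSup_upper)
    moreover have "rq u = rq x / (norm x)\<^sup>2" unfolding u_def rq_scale by (simp add: power_divide)
    ultimately show ?thesis using False by (simp add: divide_le_eq mult.commute)
  qed
  define C where "C z = s *\<^sub>R z - B z" for z
  define L where "L = s + K"
  have Lpos: "L > 0" unfolding L_def using spos Kpos by simp
  have CV: "C z \<in> V" if "z \<in> V" for z unfolding C_def using that by (intro Vdiff VscR inv)
  have Csym: "cinner (C z) w = cinner z (C w)" for z w
    unfolding C_def by (simp add: cinner_diff_left cinner_diff_right cinner_scaleR_left cinner_scaleR_right sym)
  have Cdiff: "C (z - r *\<^sub>R w) = C z - r *\<^sub>R C w" for z w r
    unfolding C_def by (simp add: B_diff B_scaleR algebra_simps)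
  have Cbnd: "norm (C z) \<le> L * norm z" for z
  proof -
    have "norm (C z) \<le> norm (s *\<^sub>R z) + norm (B z)" unfolding C_def by (rule norm_triangle_ineq4)
    also have "\<dots> \<le> s * norm z + K * norm z" using spos bnd[of z] by simp
    finally show ?thesis by (simp add: L_def algebra_simps)
  qed
  have Cpos: "0 \<le> Re (cinner (C z) z)" if "z \<in> V" for z
  proof -
    have "Re (cinner (C z) z) = s * (norm z)\<^sup>2 - rq z"
      unfolding C_def rq_def by (simp add: cinner_diff_left cinner_scaleR_left Re_cinner_self)
    then show ?thesis using bound[OF that] by simp
  qed
  have key: "(norm (C x))\<^sup>2 \<le> L * (s - rq x)" if x: "x \<in> V" "norm x = 1" for x
  proof -
    define y where "y = C x"
    define t where "t = 1 / L"
    have yV: "y \<in> V" unfolding y_def using CV x(1) .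
    have wV: "x - t *\<^sub>R y \<in> V" using x(1) yV by (intro Vdiff VscR)
    have e1: "cinner (C (x - t *\<^sub>R y)) (x - t *\<^sub>R y) =
        cinner y x - complex_of_real t * cinner y y - complex_of_real t * cinner (C y) x
        + complex_of_real t * complex_of_real t * cinner (C y) y"
      unfolding Cdiff y_def[symmetric]
      by (simp add: cinner_diff_left cinner_diff_right cinner_scaleR_left cinner_scaleR_right algebra_simps)
    have e2: "cinner (C y) x = cinner y y" using Csym[of y x] unfolding y_def by simp
    have e3: "Re (cinner y x) = s - rq x"
    proof -
      have "Re (cinner y x) = s * (norm x)\<^sup>2 - rq x"
        unfolding y_def C_def rq_def by (simp add: cinner_diff_left cinner_scaleR_left Re_cinner_self)
      then show ?thesis using x(2) by simp
    qed
    have e4: "Re (cinner (C y) y) \<le> L * (norm y)\<^sup>2"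
    proof -
      have "Re (cinner (C y) y) \<le> norm (C y) * norm y" by (rule Re_cinner_le)
      also have "\<dots> \<le> L * norm y * norm y" by (intro mult_right_mono Cbnd) simp
      finally show ?thesis by (simp add: power2_eq_square mult.assoc)
    qed
    have "0 \<le> Re (cinner (C (x - t *\<^sub>R y)) (x - t *\<^sub>R y))" using Cpos[OF wV] .
    also have "\<dots> = (s - rq x) - 2 * t * (norm y)\<^sup>2 + t * t * Re (cinner (C y) y)"
      unfolding e1 e2 using e3 by (simp add: Re_cinner_self)
    also have "\<dots> \<le> (s - rq x) - 2 * t * (norm y)\<^sup>2 + t * t * (L * (norm y)\<^sup>2)"
      using e4 by (intro add_left_mono mult_left_mono) (auto simp: t_def Lpos less_imp_le)
    also have "\<dots> = (s - rq x) - (norm y)\<^sup>2 / L"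
      unfolding t_def using Lpos by (simp add: field_simps power2_eq_square)
    finally have "(norm y)\<^sup>2 / L \<le> s - rq x" by simp
    then show ?thesis unfolding y_def using Lpos by (simp add: divide_le_eq mult.commute)
  qed
  have "\<forall>n. \<exists>x. x \<in> V \<and> norm x = 1 \<and> s - (inverse (real (Suc n)))\<^sup>2 < rq x"
  proof
    fix n
    have "s - (inverse (real (Suc n)))\<^sup>2 < s" by simp
    then have "\<exists>q\<in>Q. s - (inverse (real (Suc n)))\<^sup>2 < q"
      unfolding s_def using less_cSup_iff[OF Qne Qbd] by blast
    then show "\<exists>x. x \<in> V \<and> norm x = 1 \<and> s - (inverse (real (Suc n)))\<^sup>2 < rq x"
      unfolding Q_def by blast
  qed
  from choice[OF this] obtain xs where
    xs0: "\<forall>n. xs n \<in> V \<and> norm (xs n) = 1 \<and> s - (inverse (real (Suc n)))\<^sup>2 < rq (xs n)" by blast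
  have xs: "\<And>n. xs n \<in> V" "\<And>n. norm (xs n) = 1"
    "\<And>n. s - (inverse (real (Suc n)))\<^sup>2 < rq (xs n)" using xs0 by auto
  have Cxs: "(\<lambda>n. C (xs n)) \<longlonglongrightarrow> 0"
  proof (rule Lim_null_comparison)
    show "\<forall>\<^sub>F n in sequentially. norm (C (xs n)) \<le> sqrt L * inverse (real (Suc n))"
    proof (rule always_eventually, rule allI)
      fix n
      have "(norm (C (xs n)))\<^sup>2 \<le> L * (s - rq (xs n))" using key[OF xs(1) xs(2)] .
      also have "\<dots> \<le> L * (inverse (real (Suc n)))\<^sup>2" using xs(3)[of n] Lpos by simp
      also have "\<dots> = (sqrt L * inverse (real (Suc n)))\<^sup>2" using Lpos by (simp add: power_mult_distrib)
      finally show "norm (C (xs n)) \<le> sqrt L * inverse (real (Suc n))"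
        by (rule power2_le_imp_le) (simp add: Lpos less_imp_le)
    qed
    show "(\<lambda>n. sqrt L * inverse (real (Suc n))) \<longlonglongrightarrow> 0"
      using tendsto_mult[OF tendsto_const LIMSEQ_inverse_real_of_nat, of "sqrt L"] by simp
  qed
  have "compact (closure (B ` cball 0 1))" using cpt unfolding compact_op_def .
  then have sc: "seq_compact (closure (B ` cball 0 1))" by (rule compact_imp_seq_compact)
  have "\<forall>n. B (xs n) \<in> closure (B ` cball 0 1)"
  proof
    fix n
    have "xs n \<in> cball 0 1" using xs(2)[of n] by simp
    then have "B (xs n) \<in> B ` cball 0 1" by (rule imageI)
    then show "B (xs n) \<in> closure (B ` cball 0 1)" by (rule subsetD[OF closure_subset])
  qed
  then obtain y r where yr0: "y \<in> closure (B ` cball 0 1)" and yr: "strict_mono r" "((\<lambda>n. B (xs n)) \<circ> r) \<longlonglongrightarrow> y"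
    by (rule seq_compactE[OF sc])
  have Bxr: "(\<lambda>n. B (xs (r n))) \<longlonglongrightarrow> y" using yr(2) by (simp add: comp_def)
  have Cxr: "(\<lambda>n. C (xs (r n))) \<longlonglongrightarrow> 0" using LIMSEQ_subseq_LIMSEQ[OF Cxs yr(1)] by (simp add: comp_def)
  have "(\<lambda>n. C (xs (r n)) + B (xs (r n))) \<longlonglongrightarrow> 0 + y" by (intro tendsto_add Cxr Bxr)
  then have "(\<lambda>n. s *\<^sub>R xs (r n)) \<longlonglongrightarrow> y" unfolding C_def by simp
  then have "(\<lambda>n. (1 / s) *\<^sub>R (s *\<^sub>R xs (r n))) \<longlonglongrightarrow> (1 / s) *\<^sub>R y" by (intro tendsto_scaleR tendsto_const)
  then have xr: "(\<lambda>n. xs (r n)) \<longlonglongrightarrow> (1 / s) *\<^sub>R y" using spos by simp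
  define x0 where "x0 = (1 / s) *\<^sub>R y"
  have l1: "(\<lambda>n. norm (xs (r n))) \<longlonglongrightarrow> norm x0" unfolding x0_def by (intro tendsto_norm xr)
  have l2: "(\<lambda>n. norm (xs (r n))) \<longlonglongrightarrow> 1" using xs(2) by simp
  have nx0: "norm x0 = 1" by (rule LIMSEQ_unique[OF l1 l2])
  have x0V: "x0 \<in> V" unfolding x0_def using Vcl xs(1) xr by (rule closed_sequentially)
  have "(\<lambda>n. B (xs (r n))) \<longlonglongrightarrow> B x0" unfolding x0_def by (rule bounded_linear.tendsto[OF bl xr])
  then have "B x0 = y" using Bxr by (rule LIMSEQ_unique)
  then have "B x0 = s *\<^sub>R x0" unfolding x0_def using spos by simp
  then show ?thesis using spos x0V nx0 bound by (intro exI[of _ s] conjI bexI[of _ x0]) auto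
qed

end

context cspos begin

definition Sgt :: "real \<Rightarrow> real set" where "Sgt c = {s. c < s \<and> espace s \<noteq> {0}}"

lemma Sgt_finite: "c > 0 \<Longrightarrow> finite (Sgt c)"
  using eig_finite[of c] unfolding Sgt_def by (rule finite_subset[rotated]) auto

lemma orth_from_basis:
  assumes "cvs.span E = cvs.span G" "\<forall>e\<in>E. cinner e x = 0" "g \<in> G"
  shows "cinner g x = 0"
proof -
  have "g \<in> cvs.span E" using assms(1,3) cvs.span_base by blast
  then show ?thesis using orth_span[of E x g] assms(2) by blast
qed

lemma V_inv:
  assumes "z \<in> {x. \<forall>g\<in>(\<Union>s\<in>T. espace s). cinner g x = 0}"
  shows "B z \<in> {x. \<forall>g\<in>(\<Union>s\<in>T. espace s). cinner g x = 0}"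
proof (intro CollectI ballI)
  fix g assume "g \<in> (\<Union>s\<in>T. espace s)"
  then obtain s where s: "s \<in> T" "g \<in> espace s" by blast
  have "cinner g (B z) = cinner (B g) z" by (rule sym[symmetric])
  also have "\<dots> = complex_of_real s * cinner g z" using s(2) unfolding espace_def by (simp add: cinner_scaleR_left)
  also have "cinner g z = 0" using assms s by blast
  finally show "cinner g (B z) = 0" by simp
qed

lemma R1:
  assumes c: "c > 0"
  shows "\<exists>E. finite E \<and> orthonormal E \<and> card E = (\<Sum>s\<in>Sgt c. cvs.dim (espace s))
     \<and> (\<forall>x. (\<forall>e\<in>E. cinner e x = 0) \<longrightarrow> rq x \<le> c * (norm x)\<^sup>2)
     \<and> (\<exists>c'>c. \<forall>x\<in>cvs.span E. c' * (norm x)\<^sup>2 \<le> rq x)"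
proof -
  define T where "T = Sgt c"
  have T: "finite T" "\<forall>s\<in>T. s > 0" using Sgt_finite[OF c] c unfolding T_def Sgt_def by auto
  obtain E where E: "finite E" "orthonormal E" "card E = (\<Sum>s\<in>T. cvs.dim (espace s))"
     "cvs.span E = cvs.span (\<Union>s\<in>T. espace s)" "\<forall>e\<in>E. \<exists>s\<in>T. B e = s *\<^sub>R e"
    using union_basis[OF T] by blast
  define V where "V = {x. \<forall>g\<in>(\<Union>s\<in>T. espace s). cinner g x = 0}"
  have part1: "rq x \<le> c * (norm x)\<^sup>2" if x: "\<forall>e\<in>E. cinner e x = 0" for x
  proof (rule ccontr)
    assume nx: "\<not> rq x \<le> c * (norm x)\<^sup>2"
    have xV: "x \<in> V" unfolding V_def using orth_from_basis[OF E(4) x] by blast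
    have "0 \<le> c * (norm x)\<^sup>2" using c by simp
    then have rpos: "0 < rq x" using nx by linarith
    obtain s0 x0 where s0: "s0 > 0" "x0 \<in> V" "norm x0 = 1" "B x0 = s0 *\<^sub>R x0"
      "\<forall>x\<in>V. rq x \<le> s0 * (norm x)\<^sup>2"
      using attain[OF V_def V_inv[of _ T, folded V_def] xV rpos] by blast
    have "x \<noteq> 0" using rpos by auto
    then have "(norm x)\<^sup>2 > 0" by simp
    moreover have "c * (norm x)\<^sup>2 < s0 * (norm x)\<^sup>2" using nx s0(5) xV by force
    ultimately have "c < s0" by simp
    moreover have "x0 \<in> espace s0" "x0 \<noteq> 0" using s0 unfolding espace_def by auto
    ultimately have "s0 \<in> T" unfolding T_def Sgt_def by auto
    then have "cinner x0 x0 = 0" using s0(2) \<open>x0 \<in> espace s0\<close> unfolding V_def by blast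
    then show False using \<open>x0 \<noteq> 0\<close> cinner_self_eq_0 by blast
  qed
  define c' where "c' = Min (insert (c + 1) T)"
  have c'gt: "c' > c" unfolding c'_def using T(1) by (subst Min_gr_iff) (auto simp: T_def Sgt_def)
  have part2: "c' * (norm x)\<^sup>2 \<le> rq x" if x: "x \<in> cvs.span E" for x
  proof -
    have "\<forall>e\<in>E. \<exists>s. c' \<le> s \<and> B e = s *\<^sub>R e"
    proof
      fix e assume "e \<in> E"
      then obtain s where "s \<in> T" "B e = s *\<^sub>R e" using E(5) by blast
      moreover have "c' \<le> s" unfolding c'_def using T(1) \<open>s \<in> T\<close> by (intro Min_le) auto
      ultimately show "\<exists>s. c' \<le> s \<and> B e = s *\<^sub>R e" by blast
    qed
    then show ?thesis using rayleigh_lower[OF E(1,2) _ x] unfolding rq_def by blast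
  qed
  show ?thesis using E(1,2,3) part1 part2 c'gt unfolding T_def by blast
qed

lemma R2:
  assumes c: "c > 0"
  shows "\<exists>E. finite E \<and> orthonormal E \<and> card E = (\<Sum>s\<in>Sgt c. cvs.dim (espace s)) + cvs.dim (espace c)
     \<and> (\<exists>c''<c. \<forall>x. (\<forall>e\<in>E. cinner e x = 0) \<longrightarrow> rq x \<le> c'' * (norm x)\<^sup>2)"
proof -
  define T where "T = insert c (Sgt c)"
  have T: "finite T" "\<forall>s\<in>T. s > 0" using Sgt_finite[OF c] c unfolding T_def Sgt_def by auto
  obtain E where E: "finite E" "orthonormal E" "card E = (\<Sum>s\<in>T. cvs.dim (espace s))"
     "cvs.span E = cvs.span (\<Union>s\<in>T. espace s)"
    using union_basis[OF T] by blast
  have cardE: "card E = (\<Sum>s\<in>Sgt c. cvs.dim (espace s)) + cvs.dim (espace c)"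
    using E(3) Sgt_finite[OF c] unfolding T_def by (simp add: Sgt_def)
  define V where "V = {x. \<forall>g\<in>(\<Union>s\<in>T. espace s). cinner g x = 0}"
  have "\<exists>c''<c. \<forall>x\<in>V. rq x \<le> c'' * (norm x)\<^sup>2"
  proof (cases "\<exists>x1\<in>V. 0 < rq x1")
    case True
    then obtain x1 where x1: "x1 \<in> V" "0 < rq x1" by blast
    obtain s0 x0 where s0: "s0 > 0" "x0 \<in> V" "norm x0 = 1" "B x0 = s0 *\<^sub>R x0"
      "\<forall>x\<in>V. rq x \<le> s0 * (norm x)\<^sup>2"
      using attain[OF V_def V_inv[of _ T, folded V_def] x1] by blast
    have "s0 < c"
    proof (rule ccontr)
      assume "\<not> s0 < c"
      moreover have "x0 \<in> espace s0" "x0 \<noteq> 0" using s0 unfolding espace_def by auto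
      ultimately have "s0 \<in> T" unfolding T_def Sgt_def by auto
      then have "cinner x0 x0 = 0" using s0(2) \<open>x0 \<in> espace s0\<close> unfolding V_def by blast
      then show False using \<open>x0 \<noteq> 0\<close> cinner_self_eq_0 by blast
    qed
    then show ?thesis using s0(5) by blast
  next
    case False
    have "\<forall>x\<in>V. rq x \<le> (c / 2) * (norm x)\<^sup>2"
    proof
      fix x assume "x \<in> V"
      then have "rq x \<le> 0" using False by force
      moreover have "0 \<le> (c / 2) * (norm x)\<^sup>2" using c by simp
      ultimately show "rq x \<le> (c / 2) * (norm x)\<^sup>2" by linarith
    qed
    then show ?thesis using c by (intro exI[of _ "c / 2"]) auto
  qed
  then obtain c'' where c'': "c'' < c" "\<forall>x\<in>V. rq x \<le> c'' * (norm x)\<^sup>2" by blast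
  have "\<forall>x. (\<forall>e\<in>E. cinner e x = 0) \<longrightarrow> rq x \<le> c'' * (norm x)\<^sup>2"
  proof (intro allI impI)
    fix x assume x: "\<forall>e\<in>E. cinner e x = 0"
    have "x \<in> V" unfolding V_def using orth_from_basis[OF E(4) x] by blast
    then show "rq x \<le> c'' * (norm x)\<^sup>2" using c'' by blast
  qed
  then show ?thesis using E(1,2) cardE c''(1) by blast
qed

end

lemma perturb:
  assumes B0: "cspos B0 K0" and c: "c > 0"
  shows "\<exists>\<delta>>0. \<forall>B1 K1. cspos B1 K1 \<longrightarrow>
     (\<forall>x. \<bar>Re (cinner (B1 x) x) - Re (cinner (B0 x) x)\<bar> \<le> \<delta> * (norm x)\<^sup>2) \<longrightarrow>
     (\<Sum>s\<in>cspos.Sgt B0 c. cvs.dim (cspos.espace B0 s)) \<le> (\<Sum>s\<in>cspos.Sgt B1 c. cvs.dim (cspos.espace B1 s)) \<and>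
     (\<Sum>s\<in>cspos.Sgt B1 c. cvs.dim (cspos.espace B1 s)) \<le>
        (\<Sum>s\<in>cspos.Sgt B0 c. cvs.dim (cspos.espace B0 s)) + cvs.dim (cspos.espace B0 c)"
proof -
  interpret b0: cspos B0 K0 by (rule B0)
  obtain E0 c0 where E0: "finite E0" "orthonormal E0" "card E0 = (\<Sum>s\<in>b0.Sgt c. cvs.dim (b0.espace s))"
     "\<forall>x\<in>cvs.span E0. c0 * (norm x)\<^sup>2 \<le> b0.rq x" "c0 > c"
    using b0.R1[OF c] by blast
  obtain F0 c1 where F0: "finite F0" "orthonormal F0"
     "card F0 = (\<Sum>s\<in>b0.Sgt c. cvs.dim (b0.espace s)) + cvs.dim (b0.espace c)"
     "c1 < c" "\<forall>x. (\<forall>e\<in>F0. cinner e x = 0) \<longrightarrow> b0.rq x \<le> c1 * (norm x)\<^sup>2"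
    using b0.R2[OF c] by blast
  define \<delta> where "\<delta> = min (c0 - c) (c - c1) / 2"
  have dpos: "\<delta> > 0" unfolding \<delta>_def using E0(5) F0(4) by simp
  show ?thesis
  proof (intro exI[of _ \<delta>] conjI dpos allI impI)
    fix B1 K1 assume B1: "cspos B1 K1"
      and close: "\<forall>x. \<bar>Re (cinner (B1 x) x) - Re (cinner (B0 x) x)\<bar> \<le> \<delta> * (norm x)\<^sup>2"
    interpret b1: cspos B1 K1 by (rule B1)
    have cl: "\<bar>b1.rq x - b0.rq x\<bar> \<le> \<delta> * (norm x)\<^sup>2" for x
      using close unfolding b1.rq_def b0.rq_def by blast
    obtain E1 c2 where E1: "finite E1" "orthonormal E1" "card E1 = (\<Sum>s\<in>b1.Sgt c. cvs.dim (b1.espace s))"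
       "\<forall>x. (\<forall>e\<in>E1. cinner e x = 0) \<longrightarrow> b1.rq x \<le> c * (norm x)\<^sup>2"
       "\<forall>x\<in>cvs.span E1. c2 * (norm x)\<^sup>2 \<le> b1.rq x" "c2 > c"
      using b1.R1[OF c] by blast
    have "finite E0 \<and> card E0 \<le> card E1"
    proof (rule card_le_orth[OF E1(1,2) orthonormal_independent[OF E0(1,2)]])
      fix x assume x: "x \<in> cvs.span E0" "\<forall>e\<in>E1. cinner e x = 0"
      show "x = 0"
      proof (rule ccontr)
        assume "x \<noteq> 0"
        then have n: "(norm x)\<^sup>2 > 0" by simp
        have "b1.rq x \<le> c * (norm x)\<^sup>2" using E1(4) x(2) by blast
        moreover have "c0 * (norm x)\<^sup>2 \<le> b0.rq x" using E0(4) x(1) by blast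
        moreover have "b0.rq x - \<delta> * (norm x)\<^sup>2 \<le> b1.rq x" using cl[of x] by linarith
        moreover have "\<delta> \<le> (c0 - c) / 2" unfolding \<delta>_def by simp
        moreover have "\<delta> * (norm x)\<^sup>2 \<le> (c0 - c) / 2 * (norm x)\<^sup>2"
          using \<open>\<delta> \<le> (c0 - c) / 2\<close> by (rule mult_right_mono) simp
        moreover have "(c0 - c) * (norm x)\<^sup>2 = c0 * (norm x)\<^sup>2 - c * (norm x)\<^sup>2"
          by (simp add: left_diff_distrib)
        moreover have "(c0 - c) / 2 * (norm x)\<^sup>2 = ((c0 - c) * (norm x)\<^sup>2) / 2" by simp
        moreover have "0 < (c0 - c) * (norm x)\<^sup>2" using n E0(5) by simp
        ultimately show False by linarith
      qed
    qed
    then have low: "card E0 \<le> card E1" by blast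
    have "finite E1 \<and> card E1 \<le> card F0"
    proof (rule card_le_orth[OF F0(1,2) orthonormal_independent[OF E1(1,2)]])
      fix x assume x: "x \<in> cvs.span E1" "\<forall>e\<in>F0. cinner e x = 0"
      show "x = 0"
      proof (rule ccontr)
        assume "x \<noteq> 0"
        then have n: "(norm x)\<^sup>2 > 0" by simp
        have "b0.rq x \<le> c1 * (norm x)\<^sup>2" using F0(5) x(2) by blast
        moreover have "c2 * (norm x)\<^sup>2 \<le> b1.rq x" using E1(5) x(1) by blast
        moreover have "b1.rq x - \<delta> * (norm x)\<^sup>2 \<le> b0.rq x" using cl[of x] by linarith
        moreover have "\<delta> \<le> (c - c1) / 2" unfolding \<delta>_def by simp
        moreover have "c * (norm x)\<^sup>2 \<le> c2 * (norm x)\<^sup>2" using E1(6) n by simp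
        moreover have "\<delta> * (norm x)\<^sup>2 \<le> (c - c1) / 2 * (norm x)\<^sup>2"
          using \<open>\<delta> \<le> (c - c1) / 2\<close> by (rule mult_right_mono) simp
        moreover have "(c - c1) * (norm x)\<^sup>2 = c * (norm x)\<^sup>2 - c1 * (norm x)\<^sup>2"
          by (simp add: left_diff_distrib)
        moreover have "(c - c1) / 2 * (norm x)\<^sup>2 = ((c - c1) * (norm x)\<^sup>2) / 2" by simp
        moreover have "0 < (c - c1) * (norm x)\<^sup>2" using n F0(4) by simp
        ultimately show False by linarith
      qed
    qed
    then have up: "card E1 \<le> card F0" by blast
    show "(\<Sum>s\<in>b0.Sgt c. cvs.dim (b0.espace s)) \<le> (\<Sum>s\<in>b1.Sgt c. cvs.dim (b1.espace s))"
      using low E0(3) E1(3) by simp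
    show "(\<Sum>s\<in>b1.Sgt c. cvs.dim (b1.espace s)) \<le>
        (\<Sum>s\<in>b0.Sgt c. cvs.dim (b0.espace s)) + cvs.dim (b0.espace c)"
      using up F0(3) E1(3) by simp
  qed
qed

lemma best_approx_ident:
  assumes u: "u \<noteq> 0"
  shows "(norm (e - (cinner u e / complex_of_real ((norm u)\<^sup>2)) *\<^sub>C u))\<^sup>2
           = (norm e)\<^sup>2 - (cmod (cinner u e))\<^sup>2 / (norm u)\<^sup>2"
proof -
  define N where "N = (norm u)\<^sup>2"
  have N: "N > 0" using u by (simp add: N_def)
  define z where "z = cinner u e"
  have c: "cinner e u = cnj z" unfolding z_def by (rule cinner_commute)
  have uu: "cinner u u = complex_of_real N" by (simp add: cinner_self N_def)
  have m: "cnj z * z = complex_of_real ((cmod z)\<^sup>2)"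
    using complex_norm_square[of z] by (simp add: mult.commute)
  define t where "t = z / complex_of_real N"
  have "complex_of_real ((norm (e - t *\<^sub>C u))\<^sup>2) = cinner (e - t *\<^sub>C u) (e - t *\<^sub>C u)"
    by (simp add: cinner_self)
  also have "\<dots> = cinner e e - t * cinner e u - cnj t * cinner u e + cnj t * t * cinner u u"
    by (simp add: cinner_simps algebra_simps)
  also have "\<dots> = cinner e e - (cnj z * z) / complex_of_real N"
    unfolding t_def c uu z_def[symmetric] using N by (simp add: field_simps power2_eq_square)
  also have "\<dots> = complex_of_real ((norm e)\<^sup>2 - (cmod z)\<^sup>2 / N)"
    by (simp add: m cinner_self)
  finally show ?thesis unfolding t_def z_def N_def using of_real_eq_iff by blast
qed

lemma proj_thm:
  fixes W :: "'a::chilbert_space set"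
  assumes cl: "closed W" and W0: "0 \<in> W" and Wadd: "\<And>x y. x \<in> W \<Longrightarrow> y \<in> W \<Longrightarrow> x + y \<in> W"
    and Wsc: "\<And>c x. x \<in> W \<Longrightarrow> c *\<^sub>C x \<in> W"
  shows "\<exists>w\<in>W. \<forall>u\<in>W. cinner u (y - w) = 0"
proof -
  have WscR: "r *\<^sub>R x \<in> W" if "x \<in> W" for r x using Wsc[OF that] by (simp add: scaleR_scaleC)
  have Wdiff: "x - z \<in> W" if "x \<in> W" "z \<in> W" for x z
    using Wadd[OF that(1) WscR[OF that(2), of "-1"]] by simp
  define D where "D = (\<lambda>w. norm (y - w)) ` W"
  have Dne: "D \<noteq> {}" using W0 unfolding D_def by blast
  have Dbd: "bdd_below D" unfolding D_def by (rule bdd_belowI[of _ 0]) auto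
  define d where "d = Inf D"
  have dle: "d \<le> norm (y - w)" if "w \<in> W" for w
  proof -
    have "norm (y - w) \<in> D" using that unfolding D_def by blast
    then show ?thesis unfolding d_def by (rule cInf_lower[OF _ Dbd])
  qed
  have d0: "0 \<le> d" unfolding d_def using Dne by (rule cInf_greatest) (auto simp: D_def)
  define ep where "ep n = inverse (real (Suc n))" for n
  have ep0: "ep n > 0" for n unfolding ep_def by simp
  have "\<forall>n. \<exists>w. w \<in> W \<and> (norm (y - w))\<^sup>2 < d\<^sup>2 + ep n"
  proof
    fix n
    have "sqrt (d\<^sup>2) < sqrt (d\<^sup>2 + ep n)" using ep0[of n] by (intro real_sqrt_less_mono) simp
    then have "d < sqrt (d\<^sup>2 + ep n)" using d0 by simp
    then have "Inf D < sqrt (d\<^sup>2 + ep n)" unfolding d_def .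
    then obtain q where "q \<in> D" "q < sqrt (d\<^sup>2 + ep n)" using cInf_less_iff[OF Dne Dbd] by blast
    then obtain w where w: "w \<in> W" "norm (y - w) < sqrt (d\<^sup>2 + ep n)" unfolding D_def by blast
    then have "(norm (y - w))\<^sup>2 < (sqrt (d\<^sup>2 + ep n))\<^sup>2" by (intro power_strict_mono) auto
    then have "(norm (y - w))\<^sup>2 < d\<^sup>2 + ep n" using ep0[of n] by (simp add: less_imp_le)
    then show "\<exists>w. w \<in> W \<and> (norm (y - w))\<^sup>2 < d\<^sup>2 + ep n" using w(1) by blast
  qed
  from choice[OF this] obtain ws where ws0: "\<forall>n. ws n \<in> W \<and> (norm (y - ws n))\<^sup>2 < d\<^sup>2 + ep n" by blast
  have ws: "\<And>n. ws n \<in> W" "\<And>n. (norm (y - ws n))\<^sup>2 < d\<^sup>2 + ep n" using ws0 by auto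
  have par: "(norm (ws n - ws m))\<^sup>2 \<le> 2 * ep n + 2 * ep m" for n m
  proof -
    define a where "a = y - ws n"
    define b where "b = y - ws m"
    have P: "(norm (a + b))\<^sup>2 + (norm (a - b))\<^sup>2 = 2 * (norm a)\<^sup>2 + 2 * (norm b)\<^sup>2"
      using norm_add_sq[of a b] norm_diff_sq[of a b] by simp
    have "a - b = ws m - ws n" unfolding a_def b_def by simp
    then have Q: "(norm (ws n - ws m))\<^sup>2 = (norm (a - b))\<^sup>2" by (simp add: norm_minus_commute)
    have ab: "a + b = 2 *\<^sub>R (y - (1/2) *\<^sub>R (ws n + ws m))"
      unfolding a_def b_def by (simp add: algebra_simps scaleR_2)
    have "d \<le> norm (y - (1/2) *\<^sub>R (ws n + ws m))"
      using ws(1) by (intro dle WscR Wadd)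
    then have "4 * d\<^sup>2 \<le> (norm (2 *\<^sub>R (y - (1/2) *\<^sub>R (ws n + ws m))))\<^sup>2"
      using d0 by (simp add: power_mult_distrib power_mono)
    then have R: "4 * d\<^sup>2 \<le> (norm (a + b))\<^sup>2" unfolding ab .
    have S: "(norm a)\<^sup>2 < d\<^sup>2 + ep n" "(norm b)\<^sup>2 < d\<^sup>2 + ep m" unfolding a_def b_def using ws(2) by auto
    show ?thesis using P Q R S by linarith
  qed
  have cws: "Cauchy ws"
  proof (rule CauchyI)
    fix e :: real assume e: "e > 0"
    obtain M where M: "inverse (real (Suc M)) < e\<^sup>2 / 4" using reals_Archimedean[of "e\<^sup>2 / 4"] e by auto
    show "\<exists>M. \<forall>m\<ge>M. \<forall>n\<ge>M. norm (ws m - ws n) < e"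
    proof (intro exI[of _ M] allI impI)
      fix m n assume mn: "M \<le> m" "M \<le> n"
      have "ep m \<le> ep M" "ep n \<le> ep M" unfolding ep_def using mn by (auto intro!: le_imp_inverse_le)
      then have "(norm (ws m - ws n))\<^sup>2 < e\<^sup>2" using par[of m n] M unfolding ep_def by linarith
      then show "norm (ws m - ws n) < e" using e by (simp add: power_less_imp_less_base)
    qed
  qed
  then obtain w where wl: "ws \<longlonglongrightarrow> w" using Cauchy_convergent[OF cws] unfolding convergent_def by blast
  have wW: "w \<in> W" using cl ws(1) wl by (rule closed_sequentially)
  have nd: "norm (y - w) \<le> d"
  proof (rule LIMSEQ_le)
    show "(\<lambda>n. norm (y - ws n)) \<longlonglongrightarrow> norm (y - w)" by (intro tendsto_intros wl)
    show "(\<lambda>n. sqrt (d\<^sup>2 + ep n)) \<longlonglongrightarrow> d"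
    proof -
      have "(\<lambda>n. sqrt (d\<^sup>2 + ep n)) \<longlonglongrightarrow> sqrt (d\<^sup>2 + 0)"
        unfolding ep_def by (intro tendsto_intros LIMSEQ_inverse_real_of_nat)
      then show ?thesis using d0 by simp
    qed
    show "\<exists>N. \<forall>n\<ge>N. norm (y - ws n) \<le> sqrt (d\<^sup>2 + ep n)"
      using ws(2) by (intro exI[of _ 0] allI impI real_le_rsqrt) (simp add: less_imp_le)
  qed
  have "\<forall>u\<in>W. cinner u (y - w) = 0"
  proof
    fix u assume u: "u \<in> W"
    show "cinner u (y - w) = 0"
    proof (cases "u = 0")
      case True then show ?thesis by simp
    next
      case False
      define t where "t = cinner u (y - w) / complex_of_real ((norm u)\<^sup>2)"
      have "w + t *\<^sub>C u \<in> W" using wW u by (intro Wadd Wsc)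
      then have "d \<le> norm (y - (w + t *\<^sub>C u))" by (rule dle)
      moreover have "y - (w + t *\<^sub>C u) = (y - w) - t *\<^sub>C u" by simp
      ultimately have "d \<le> norm ((y - w) - t *\<^sub>C u)" by simp
      then have "d\<^sup>2 \<le> (norm ((y - w) - t *\<^sub>C u))\<^sup>2" using d0 by (intro power_mono) auto
      also have "\<dots> = (norm (y - w))\<^sup>2 - (cmod (cinner u (y - w)))\<^sup>2 / (norm u)\<^sup>2"
        unfolding t_def by (rule best_approx_ident[OF False])
      finally have "(cmod (cinner u (y - w)))\<^sup>2 / (norm u)\<^sup>2 \<le> (norm (y - w))\<^sup>2 - d\<^sup>2" by simp
      also have "\<dots> \<le> 0" using nd d0 by (simp add: power_mono)
      finally have "(cmod (cinner u (y - w)))\<^sup>2 \<le> 0" using False by (simp add: divide_le_0_iff)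
      then show ?thesis by simp
    qed
  qed
  then show ?thesis using wW by blast
qed

lemma res_in:
  assumes "resolvent_bij A z"
  shows "resolvent A z y \<in> fst A \<and> snd A (resolvent A z y) - z *\<^sub>C resolvent A z y = y"
proof -
  have "\<exists>!x. x \<in> fst A \<and> snd A x - z *\<^sub>C x = y" using assms unfolding resolvent_bij_def by blast
  then show ?thesis unfolding resolvent_def by (rule theI')
qed

lemma res_unique:
  assumes "resolvent_bij A z" "x \<in> fst A" "snd A x - z *\<^sub>C x = y"
  shows "resolvent A z y = x"
proof -
  have "\<exists>!x. x \<in> fst A \<and> snd A x - z *\<^sub>C x = y" using assms unfolding resolvent_bij_def by blast
  moreover have "x \<in> fst A \<and> snd A x - z *\<^sub>C x = y" using assms(2,3) by simp
  ultimately show ?thesis unfolding resolvent_def by (rule the1_equality)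
qed

lemma linop_facts:
  assumes "linear_op A"
  shows "0 \<in> fst A" "x \<in> fst A \<Longrightarrow> y \<in> fst A \<Longrightarrow> x + y \<in> fst A"
    "x \<in> fst A \<Longrightarrow> c *\<^sub>C x \<in> fst A"
    "x \<in> fst A \<Longrightarrow> y \<in> fst A \<Longrightarrow> snd A (x + y) = snd A x + snd A y"
    "x \<in> fst A \<Longrightarrow> snd A (c *\<^sub>C x) = c *\<^sub>C snd A x"
  using assms unfolding linear_op_def csubspace_def by auto

lemma res_linear:
  assumes L: "linear_op A" and bij: "resolvent_bij A z"
  shows "Vector_Spaces.linear scaleC scaleC (resolvent A z)"
  unfolding Vector_Spaces.linear_iff
proof (intro conjI allI cvs.vector_space_axioms)
  fix y1 y2
  have u: "resolvent A z y1 \<in> fst A" "snd A (resolvent A z y1) - z *\<^sub>C resolvent A z y1 = y1"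
    using res_in[OF bij] by auto
  have v: "resolvent A z y2 \<in> fst A" "snd A (resolvent A z y2) - z *\<^sub>C resolvent A z y2 = y2"
    using res_in[OF bij] by auto
  show "resolvent A z (y1 + y2) = resolvent A z y1 + resolvent A z y2"
  proof (rule res_unique[OF bij])
    show "resolvent A z y1 + resolvent A z y2 \<in> fst A" using linop_facts(2)[OF L u(1) v(1)] .
    show "snd A (resolvent A z y1 + resolvent A z y2) - z *\<^sub>C (resolvent A z y1 + resolvent A z y2) = y1 + y2"
      using linop_facts(4)[OF L u(1) v(1)] u(2) v(2) by (simp add: scaleC_add_right algebra_simps)
  qed
next
  fix c y
  have u: "resolvent A z y \<in> fst A" "snd A (resolvent A z y) - z *\<^sub>C resolvent A z y = y"
    using res_in[OF bij] by auto
  show "resolvent A z (c *\<^sub>C y) = c *\<^sub>C resolvent A z y"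
  proof (rule res_unique[OF bij])
    show "c *\<^sub>C resolvent A z y \<in> fst A" using linop_facts(3)[OF L u(1)] .
    have "snd A (c *\<^sub>C resolvent A z y) - z *\<^sub>C (c *\<^sub>C resolvent A z y)
        = c *\<^sub>C (snd A (resolvent A z y) - z *\<^sub>C resolvent A z y)"
      using linop_facts(5)[OF L u(1)] by (simp add: scaleC_diff_right scaleC_scaleC mult.commute)
    then show "snd A (c *\<^sub>C resolvent A z y) - z *\<^sub>C (c *\<^sub>C resolvent A z y) = c *\<^sub>C y"
      using u(2) by simp
  qed
qed

lemma tendsto_cinner_left: "(f \<longlongrightarrow> l) F \<Longrightarrow> ((\<lambda>n. cinner (f n) g) \<longlongrightarrow> cinner l g) F"
proof -
  assume "(f \<longlongrightarrow> l) F"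
  then have "((\<lambda>n. cnj (cinner g (f n))) \<longlongrightarrow> cnj (cinner g l)) F"
    by (intro tendsto_cnj tendsto_cinner_right)
  moreover have "cnj (cinner g y) = cinner y g" for y by (subst cinner_commute) simp
  ultimately show ?thesis by simp
qed

locale sa_op =
  fixes A :: "'a::chilbert_space op" and \<mu> a :: real
  assumes sa: "self_adjoint A" and cr: "compact_resolvent A" and ge: "op_ge A \<mu>"
    and a_mu: "a < \<mu>" and a_neg: "a < 0"
begin

lemma L: "linear_op A" using sa unfolding self_adjoint_def by blast
lemma symm: "x \<in> fst A \<Longrightarrow> y \<in> fst A \<Longrightarrow> cinner (snd A x) y = cinner x (snd A y)"
  using sa unfolding self_adjoint_def by blast
lemma dense: "closure (fst A) = UNIV" using sa unfolding self_adjoint_def by blast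
lemma adj: "adjoint_domain A = fst A" using sa unfolding self_adjoint_def by blast

lemma D0: "0 \<in> fst A" by (rule linop_facts(1)[OF L])
lemma Dadd: "x \<in> fst A \<Longrightarrow> y \<in> fst A \<Longrightarrow> x + y \<in> fst A" by (rule linop_facts(2)[OF L])
lemma DscC: "x \<in> fst A \<Longrightarrow> c *\<^sub>C x \<in> fst A" by (rule linop_facts(3)[OF L])
lemma DscR: "x \<in> fst A \<Longrightarrow> r *\<^sub>R x \<in> fst A" by (simp add: scaleR_scaleC DscC)
lemma Dminus: "x \<in> fst A \<Longrightarrow> - x \<in> fst A" using DscR[of x "-1"] by simp
lemma Ddiff: "x \<in> fst A \<Longrightarrow> y \<in> fst A \<Longrightarrow> x - y \<in> fst A"
  using Dadd[of x "- y"] Dminus[of y] by simp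
lemma Tadd: "x \<in> fst A \<Longrightarrow> y \<in> fst A \<Longrightarrow> snd A (x + y) = snd A x + snd A y" by (rule linop_facts(4)[OF L])
lemma TscC: "x \<in> fst A \<Longrightarrow> snd A (c *\<^sub>C x) = c *\<^sub>C snd A x" by (rule linop_facts(5)[OF L])
lemma TscR: "x \<in> fst A \<Longrightarrow> snd A (r *\<^sub>R x) = r *\<^sub>R snd A x" by (simp add: scaleR_scaleC TscC)
lemma Tminus: "x \<in> fst A \<Longrightarrow> snd A (- x) = - snd A x" using TscR[of x "-1"] by simp
lemma Tdiff: "x \<in> fst A \<Longrightarrow> y \<in> fst A \<Longrightarrow> snd A (x - y) = snd A x - snd A y"
  using Tadd[of x "- y"] Dminus[of y] Tminus[of y] by simp

lemma coercive: "x \<in> fst A \<Longrightarrow> (\<mu> - a) * (norm x)\<^sup>2 \<le> Re (cinner x (snd A x - a *\<^sub>R x))"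
proof -
  assume x: "x \<in> fst A"
  have "0 \<le> Re (cinner x (snd A x - complex_of_real \<mu> *\<^sub>C x))" using ge x unfolding op_ge_def by blast
  moreover have "cinner x (snd A x - a *\<^sub>R x) = cinner x (snd A x - complex_of_real \<mu> *\<^sub>C x)
      + complex_of_real (\<mu> - a) * cinner x x"
    by (simp add: cinner_diff_right cinner_scaleR_right cinner_scaleC_right algebra_simps)
  ultimately show ?thesis by (simp add: Re_cinner_self)
qed

lemma coercive2: "x \<in> fst A \<Longrightarrow> (\<mu> - a) * norm x \<le> norm (snd A x - a *\<^sub>R x)"
proof -
  assume x: "x \<in> fst A"
  have "(\<mu> - a) * (norm x)\<^sup>2 \<le> norm x * norm (snd A x - a *\<^sub>R x)"
    using coercive[OF x] Re_cinner_le[of x "snd A x - a *\<^sub>R x"] by linarith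
  then show ?thesis
    by (cases "x = 0") (auto simp: power2_eq_square mult.commute mult.left_commute)
qed

lemma dense_zero:
  assumes "\<forall>z\<in>fst A. cinner z v = 0" shows "v = 0"
proof -
  have "v \<in> closure (fst A)" using dense by simp
  then obtain zs where zs: "\<forall>n. zs n \<in> fst A" "zs \<longlonglongrightarrow> v" using closure_sequential by blast
  have "(\<lambda>n. cinner (zs n) v) \<longlonglongrightarrow> cinner v v" by (rule tendsto_cinner_left[OF zs(2)])
  moreover have "(\<lambda>n. cinner (zs n) v) = (\<lambda>n. 0)" using zs(1) assms by auto
  ultimately have "cinner v v = 0" using LIMSEQ_unique tendsto_const by (metis (no_types))
  then show ?thesis by (rule cinner_self_eq_0)
qed

lemma closed_op:
  assumes xs: "\<And>n. xs n \<in> fst A" and xl: "xs \<longlonglongrightarrow> x" and wl: "(\<lambda>n. snd A (xs n)) \<longlonglongrightarrow> w"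
  shows "x \<in> fst A \<and> snd A x = w"
proof -
  have eq: "cinner (snd A z) x = cinner z w" if z: "z \<in> fst A" for z
  proof -
    have "(\<lambda>n. cinner (snd A z) (xs n)) \<longlonglongrightarrow> cinner (snd A z) x" by (rule tendsto_cinner_right[OF xl])
    moreover have "(\<lambda>n. cinner (snd A z) (xs n)) = (\<lambda>n. cinner z (snd A (xs n)))"
      using symm[OF z xs] by auto
    moreover have "(\<lambda>n. cinner z (snd A (xs n))) \<longlonglongrightarrow> cinner z w" by (rule tendsto_cinner_right[OF wl])
    ultimately show ?thesis using LIMSEQ_unique by metis
  qed
  have "x \<in> adjoint_domain A" unfolding adjoint_domain_def using eq by blast
  then have xD: "x \<in> fst A" using adj by simp
  have "\<forall>z\<in>fst A. cinner z (snd A x - w) = 0"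
    using eq symm[OF _ xD] by (simp add: cinner_diff_right)
  then have "snd A x - w = 0" by (rule dense_zero)
  then show ?thesis using xD by simp
qed

end

context sa_op begin

definition W :: "'a set" where "W = {snd A x - a *\<^sub>R x | x. x \<in> fst A}"

lemma W_closed: "closed W"
  unfolding closed_sequential_limits
proof (intro allI impI)
  fix ys y assume H: "(\<forall>n. ys n \<in> W) \<and> ys \<longlonglongrightarrow> y"
  have "\<forall>n. \<exists>x. x \<in> fst A \<and> snd A x - a *\<^sub>R x = ys n"
  proof
    fix n
    have "ys n \<in> W" using H by blast
    then obtain x where "x \<in> fst A" "ys n = snd A x - a *\<^sub>R x" unfolding W_def mem_Collect_eq by blast
    then show "\<exists>x. x \<in> fst A \<and> snd A x - a *\<^sub>R x = ys n" by auto
  qed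
  from choice[OF this] obtain xs where xs0: "\<forall>n. xs n \<in> fst A \<and> snd A (xs n) - a *\<^sub>R xs n = ys n" by blast
  have xs: "\<And>n. xs n \<in> fst A" "\<And>n. snd A (xs n) - a *\<^sub>R xs n = ys n" using xs0 by auto
  have yl: "ys \<longlonglongrightarrow> y" using H by blast
  have dist: "norm (xs m - xs n) \<le> norm (ys m - ys n) / (\<mu> - a)" for m n
  proof -
    have "snd A (xs m - xs n) - a *\<^sub>R (xs m - xs n) = ys m - ys n"
      using xs Tdiff[OF xs(1) xs(1)] by (simp add: scaleR_diff_right algebra_simps)
    moreover have "(\<mu> - a) * norm (xs m - xs n) \<le> norm (snd A (xs m - xs n) - a *\<^sub>R (xs m - xs n))"
      using coercive2[OF Ddiff[OF xs(1) xs(1)]] .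
    ultimately have "(\<mu> - a) * norm (xs m - xs n) \<le> norm (ys m - ys n)" by simp
    then show ?thesis using a_mu by (simp add: pos_le_divide_eq mult.commute)
  qed
  have "Cauchy ys" using yl by (rule LIMSEQ_imp_Cauchy)
  then have cys: "\<forall>e>0. \<exists>M. \<forall>m\<ge>M. \<forall>n\<ge>M. norm (ys m - ys n) < e" unfolding Cauchy_iff .
  have cxs: "Cauchy xs"
    unfolding Cauchy_iff
  proof (intro allI impI)
    fix e :: real assume e: "e > 0"
    then have "e * (\<mu> - a) > 0" using a_mu by simp
    then obtain M where M: "\<forall>m\<ge>M. \<forall>n\<ge>M. norm (ys m - ys n) < e * (\<mu> - a)"
      using cys by blast
    show "\<exists>M. \<forall>m\<ge>M. \<forall>n\<ge>M. norm (xs m - xs n) < e"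
    proof (intro exI[of _ M] allI impI)
      fix m n assume "M \<le> m" "M \<le> n"
      then have "norm (ys m - ys n) < e * (\<mu> - a)" using M by blast
      then have "norm (ys m - ys n) / (\<mu> - a) < e" using a_mu by (simp add: pos_divide_less_eq)
      then show "norm (xs m - xs n) < e" using dist[of m n] by linarith
    qed
  qed
  obtain x where xl: "xs \<longlonglongrightarrow> x" using Cauchy_convergent[OF cxs] unfolding convergent_def by blast
  have "(\<lambda>n. ys n + a *\<^sub>R xs n) \<longlonglongrightarrow> y + a *\<^sub>R x" by (intro tendsto_intros yl xl)
  moreover have "(\<lambda>n. ys n + a *\<^sub>R xs n) = (\<lambda>n. snd A (xs n))" using xs(2) by (auto simp: algebra_simps)
  ultimately have "(\<lambda>n. snd A (xs n)) \<longlonglongrightarrow> y + a *\<^sub>R x" by simp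
  then have "x \<in> fst A \<and> snd A x = y + a *\<^sub>R x" by (rule closed_op[OF xs(1) xl])
  then show "y \<in> W" unfolding W_def by (intro CollectI exI[of _ x]) auto
qed

lemma surj: "\<exists>x\<in>fst A. snd A x - a *\<^sub>R x = y"
proof -
  have W0: "0 \<in> W" unfolding W_def using D0 by (intro CollectI exI[of _ 0]) (simp add: linop_facts(5)[OF L, of 0 0, simplified])
  have Wadd: "u + v \<in> W" if uv: "u \<in> W" "v \<in> W" for u v
  proof -
    obtain x1 where x1: "x1 \<in> fst A" "u = snd A x1 - a *\<^sub>R x1"
      using uv(1) unfolding W_def mem_Collect_eq by blast
    obtain x2 where x2: "x2 \<in> fst A" "v = snd A x2 - a *\<^sub>R x2"
      using uv(2) unfolding W_def mem_Collect_eq by blast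
    have "u + v = snd A (x1 + x2) - a *\<^sub>R (x1 + x2)"
      unfolding x1(2) x2(2) Tadd[OF x1(1) x2(1)] by (simp add: scaleR_add_right algebra_simps)
    moreover have "x1 + x2 \<in> fst A" using Dadd[OF x1(1) x2(1)] .
    ultimately show ?thesis unfolding W_def by blast
  qed
  have Wsc: "c *\<^sub>C u \<in> W" if u: "u \<in> W" for u c
  proof -
    obtain x1 where "x1 \<in> fst A" "u = snd A x1 - a *\<^sub>R x1" using u unfolding W_def mem_Collect_eq by blast
    then show ?thesis unfolding W_def
      by (intro CollectI exI[of _ "c *\<^sub>C x1"])
         (auto simp: DscC TscC scaleC_diff_right scaleR_scaleC scaleC_scaleC mult.commute)
  qed
  obtain w where w: "w \<in> W" "\<forall>u\<in>W. cinner u (y - w) = 0"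
    using proj_thm[OF W_closed W0 Wadd Wsc] by blast
  define v where "v = y - w"
  have orth: "cinner (snd A x - a *\<^sub>R x) v = 0" if "x \<in> fst A" for x
    using w(2) that unfolding W_def v_def by blast
  have "\<forall>x\<in>fst A. cinner (snd A x) v = cinner x (a *\<^sub>R v)"
  proof
    fix x assume x: "x \<in> fst A"
    show "cinner (snd A x) v = cinner x (a *\<^sub>R v)"
      using orth[OF x] by (simp add: cinner_diff_left cinner_scaleR_left cinner_scaleR_right)
  qed
  then have "v \<in> adjoint_domain A" unfolding adjoint_domain_def by blast
  then have vD: "v \<in> fst A" using adj by simp
  have "\<forall>z\<in>fst A. cinner z (snd A v - a *\<^sub>R v) = 0"
  proof
    fix z assume z: "z \<in> fst A"
    have "cinner z (snd A v - a *\<^sub>R v) = cinner (snd A z - a *\<^sub>R z) v"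
      using symm[OF z vD] by (simp add: cinner_diff_left cinner_diff_right cinner_scaleR_left cinner_scaleR_right)
    then show "cinner z (snd A v - a *\<^sub>R v) = 0" using orth[OF z] by simp
  qed
  then have "snd A v - a *\<^sub>R v = 0" by (rule dense_zero)
  then have "(\<mu> - a) * norm v \<le> 0" using coercive2[OF vD] by simp
  then have "v = 0" using a_mu by (simp add: mult_le_0_iff)
  then have "y \<in> W" using w(1) unfolding v_def by simp
  then show ?thesis unfolding W_def by blast
qed

lemma bij: "resolvent_bij A (complex_of_real a)"
  unfolding resolvent_bij_def
proof
  fix y
  obtain x where x: "x \<in> fst A" "snd A x - a *\<^sub>R x = y" using surj by blast
  show "\<exists>!x. x \<in> fst A \<and> snd A x - complex_of_real a *\<^sub>C x = y"
  proof (rule ex1I[of _ x])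
    show "x \<in> fst A \<and> snd A x - complex_of_real a *\<^sub>C x = y" using x by (simp add: scaleC_real)
    fix x' assume x': "x' \<in> fst A \<and> snd A x' - complex_of_real a *\<^sub>C x' = y"
    have "snd A (x' - x) - a *\<^sub>R (x' - x) = 0"
      using x x' Tdiff[of x' x] by (simp add: scaleC_real scaleR_diff_right algebra_simps)
    then have "(\<mu> - a) * norm (x' - x) \<le> 0" using coercive2[OF Ddiff[of x' x]] x x' by simp
    then show "x' = x" using a_mu by (simp add: mult_le_0_iff)
  qed
qed

definition R :: "'a \<Rightarrow> 'a" where "R = resolvent A (complex_of_real a)"

lemma R_in: "R y \<in> fst A" "snd A (R y) - a *\<^sub>R R y = y"
  using res_in[OF bij, of y] unfolding R_def by (auto simp: scaleC_real)

lemma R_unique: "x \<in> fst A \<Longrightarrow> snd A x - a *\<^sub>R x = y \<Longrightarrow> R y = x"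
  unfolding R_def by (rule res_unique[OF bij]) (auto simp: scaleC_real)

lemma R_lin: "Vector_Spaces.linear scaleC scaleC R"
  unfolding R_def by (rule res_linear[OF L bij])

lemma Ri_bij: "resolvent_bij A \<i>" using cr unfolding compact_resolvent_def by blast
lemma Ri_cpt: "compact_op (resolvent A \<i>)" using cr unfolding compact_resolvent_def by blast
lemma Ri_lin: "Vector_Spaces.linear scaleC scaleC (resolvent A \<i>)" by (rule res_linear[OF L Ri_bij])

lemma R_via_Ri: "resolvent A \<i> (y + (complex_of_real a - \<i>) *\<^sub>C R y) = R y"
proof (rule res_unique[OF Ri_bij])
  show "R y \<in> fst A" by (rule R_in)
  show "snd A (R y) - \<i> *\<^sub>C R y = y + (complex_of_real a - \<i>) *\<^sub>C R y"
    using R_in(2)[of y] by (simp add: scaleC_diff_left scaleC_real algebra_simps)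
qed

lemma Ri_via_R: "R y = resolvent A \<i> y + (complex_of_real a - \<i>) *\<^sub>C R (resolvent A \<i> y)"
proof -
  define v where "v = resolvent A \<i> y"
  have v: "v \<in> fst A" "snd A v - \<i> *\<^sub>C v = y" using res_in[OF Ri_bij] unfolding v_def by auto
  have "snd A v - a *\<^sub>R v = y + (\<i> - complex_of_real a) *\<^sub>C v"
    using v(2) by (simp add: scaleC_diff_left scaleC_real algebra_simps)
  then have Rw: "R (y + (\<i> - complex_of_real a) *\<^sub>C v) = v" by (rule R_unique[OF v(1)])
  have "R (y + (\<i> - complex_of_real a) *\<^sub>C v) = R y + (\<i> - complex_of_real a) *\<^sub>C R v"
    using cpair.linear_add[OF R_lin] cpair.linear_scale[OF R_lin] by simp
  then have "R y = v - (\<i> - complex_of_real a) *\<^sub>C R v" using Rw by (simp add: algebra_simps)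
  also have "\<dots> = v + (complex_of_real a - \<i>) *\<^sub>C R v"
    by (simp add: scaleC_diff_left algebra_simps)
  finally show ?thesis unfolding v_def .
qed

lemma R_bnd: "norm (R y) \<le> (1 / (\<mu> - a)) * norm y"
  using coercive2[OF R_in(1)[of y]] R_in(2)[of y] a_mu by (simp add: field_simps)

lemma R_cspos: "cspos R (1 / (\<mu> - a))"
proof (rule cspos.intro)
  show "Vector_Spaces.linear scaleC scaleC R" by (rule R_lin)
  show "norm (R x) \<le> 1 / (\<mu> - a) * norm x" for x by (rule R_bnd)
  show "1 / (\<mu> - a) > 0" using a_mu by simp
  show "cinner (R x) y = cinner x (R y)" for x y
  proof -
    have "cinner (R x) y = cinner (R x) (snd A (R y) - a *\<^sub>R R y)" using R_in(2)[of y] by simp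
    also have "\<dots> = cinner (snd A (R x) - a *\<^sub>R R x) (R y)"
      using symm[OF R_in(1) R_in(1)]
      by (simp add: cinner_diff_left cinner_diff_right cinner_scaleR_left cinner_scaleR_right)
    also have "\<dots> = cinner x (R y)" using R_in(2)[of x] by simp
    finally show ?thesis .
  qed
  show "0 \<le> Re (cinner (R x) x)" for x
  proof -
    have "cinner (R x) x = cinner (R x) (snd A (R x) - a *\<^sub>R R x)" using R_in(2)[of x] by simp
    then have "(\<mu> - a) * (norm (R x))\<^sup>2 \<le> Re (cinner (R x) x)" using coercive[OF R_in(1)[of x]] by simp
    moreover have "0 \<le> (\<mu> - a) * (norm (R x))\<^sup>2" using a_mu by simp
    ultimately show ?thesis by linarith
  qed
  show "compact_op R"
    unfolding compact_op_def
  proof -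
    define M where "M = 1 + cmod (complex_of_real a - \<i>) / (\<mu> - a)"
    have Mpos: "M > 0" unfolding M_def using a_mu by (simp add: add_pos_nonneg)
    define C where "C = (\<lambda>x. M *\<^sub>R x) ` closure (resolvent A \<i> ` cball 0 1)"
    have cC: "compact C" unfolding C_def using Ri_cpt unfolding compact_op_def by (rule compact_scaling)
    have sub: "R ` cball 0 1 \<subseteq> C"
    proof
      fix z assume "z \<in> R ` cball 0 1"
      then obtain y where y: "norm y \<le> 1" "z = R y" by auto
      define S where "S = y + (complex_of_real a - \<i>) *\<^sub>C R y"
      have "norm S \<le> norm y + cmod (complex_of_real a - \<i>) * norm (R y)"
        unfolding S_def using norm_triangle_ineq[of y "(complex_of_real a - \<i>) *\<^sub>C R y"]
        by (simp add: norm_scaleC)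
      also have "\<dots> \<le> 1 + cmod (complex_of_real a - \<i>) * (1 / (\<mu> - a))"
      proof (intro add_mono mult_left_mono)
        have "norm y / (\<mu> - a) \<le> 1 / (\<mu> - a)" using y(1) a_mu by (intro divide_right_mono) auto
        then show "norm (R y) \<le> 1 / (\<mu> - a)" using R_bnd[of y] by simp
      qed (use y(1) in auto)
      finally have nS: "norm S \<le> M" unfolding M_def by simp
      have "(1 / M) *\<^sub>R S \<in> cball 0 1" using nS Mpos by (simp add: divide_le_eq)
      then have "resolvent A \<i> ((1 / M) *\<^sub>R S) \<in> closure (resolvent A \<i> ` cball 0 1)"
        by (intro subsetD[OF closure_subset] imageI)
      moreover have "z = M *\<^sub>R resolvent A \<i> ((1 / M) *\<^sub>R S)"
      proof -
        have "resolvent A \<i> ((1 / M) *\<^sub>R S) = (1 / M) *\<^sub>R resolvent A \<i> S"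
          using cpair.linear_scale[OF Ri_lin] by (simp add: scaleR_scaleC)
        then show ?thesis using Mpos y(2) R_via_Ri[of y] unfolding S_def by simp
      qed
      ultimately show "z \<in> C" unfolding C_def by blast
    qed
    have "closure (R ` cball 0 1) \<subseteq> C" using sub compact_imp_closed[OF cC] by (rule closure_minimal)
    then have "closure (R ` cball 0 1) = C \<inter> closure (R ` cball 0 1)" by blast
    also have "compact \<dots>" using cC by (rule compact_Int_closed) simp
    finally show "compact (closure (R ` cball 0 1))" .
  qed
qed

end

context sa_op begin

lemma R_scaleR: "R (r *\<^sub>R x) = r *\<^sub>R R x"
  using cpair.linear_scale[OF R_lin] by (simp add: scaleR_scaleC)

lemma eig_link:
  assumes t: "t > a"
  shows "eigenspace A (complex_of_real t) = cspos.espace R (1 / (t - a))"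
proof
  show "eigenspace A (complex_of_real t) \<subseteq> cspos.espace R (1 / (t - a))"
  proof
    fix x assume "x \<in> eigenspace A (complex_of_real t)"
    then have x: "x \<in> fst A" "snd A x = t *\<^sub>R x" unfolding eigenspace_def by (auto simp: scaleC_real)
    have "snd A x - a *\<^sub>R x = (t - a) *\<^sub>R x" using x(2) by (simp add: scaleR_diff_left)
    then have "R ((t - a) *\<^sub>R x) = x" by (rule R_unique[OF x(1)])
    then have "(t - a) *\<^sub>R R x = x" by (simp add: R_scaleR)
    then have "R x = (1 / (t - a)) *\<^sub>R x" using t by (metis (no_types, lifting) diff_gt_0_iff_gt
      less_numeral_extra(3) nonzero_eq_divide_eq scaleR_scaleR scaleR_one)
    then show "x \<in> cspos.espace R (1 / (t - a))" unfolding cspos.espace_def[OF R_cspos] by simp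
  qed
  show "cspos.espace R (1 / (t - a)) \<subseteq> eigenspace A (complex_of_real t)"
  proof
    fix x assume "x \<in> cspos.espace R (1 / (t - a))"
    then have Rx: "R x = (1 / (t - a)) *\<^sub>R x" unfolding cspos.espace_def[OF R_cspos] by simp
    have xR: "x = (t - a) *\<^sub>R R x" using t by (simp add: Rx)
    have xD: "x \<in> fst A" using DscR[OF R_in(1)[of x], of "t - a"] xR by simp
    have "snd A x = (t - a) *\<^sub>R snd A (R x)" using xR TscR[OF R_in(1)[of x], of "t - a"] by simp
    also have "snd A (R x) = x + a *\<^sub>R R x" using R_in(2)[of x] by (simp add: algebra_simps)
    also have "(t - a) *\<^sub>R (x + a *\<^sub>R R x) = (t - a) *\<^sub>R x + a *\<^sub>R ((t - a) *\<^sub>R R x)"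
      by (simp add: scaleR_add_right)
    also have "\<dots> = t *\<^sub>R x" using xR[symmetric] by (simp add: scaleR_diff_left)
    finally show "x \<in> eigenspace A (complex_of_real t)" unfolding eigenspace_def using xD by (simp add: scaleC_real)
  qed
qed

lemma eig_ge:
  assumes "is_eigenvalue A (complex_of_real t)"
  shows "\<mu> \<le> t"
proof -
  have "0 \<in> eigenspace A (complex_of_real t)" unfolding eigenspace_def using D0 TscR[OF D0, of 0] by simp
  then obtain x where x: "x \<in> eigenspace A (complex_of_real t)" "x \<noteq> 0"
    using assms unfolding is_eigenvalue_def by blast
  then have xD: "x \<in> fst A" and Tx: "snd A x = t *\<^sub>R x" unfolding eigenspace_def by (auto simp: scaleC_real)
  have "0 \<le> Re (cinner x (snd A x - complex_of_real \<mu> *\<^sub>C x))" using ge xD unfolding op_ge_def by blast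
  also have "cinner x (snd A x - complex_of_real \<mu> *\<^sub>C x) = complex_of_real ((t - \<mu>) * (norm x)\<^sup>2)"
    by (simp add: Tx scaleC_real cinner_diff_right cinner_scaleR_right cinner_self algebra_simps)
  finally have "0 \<le> (t - \<mu>) * (norm x)\<^sup>2" by simp
  then show ?thesis using x(2) by (simp add: zero_le_mult_iff)
qed

lemma mult0: "multiplicity_ev A 0 = cvs.dim (cspos.espace R (- 1 / a))"
proof -
  have "eigenspace A (complex_of_real 0) = cspos.espace R (1 / (0 - a))" using a_neg by (intro eig_link) simp
  then show ?thesis unfolding multiplicity_ev_def by simp
qed

lemma nu_eq:
  "(\<Sum>t\<in>{t. t < 0 \<and> is_eigenvalue A (complex_of_real t)}. multiplicity_ev A (complex_of_real t))
     = (\<Sum>s\<in>cspos.Sgt R (- 1 / a). cvs.dim (cspos.espace R s))"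
proof -
  define TS where "TS = {t. t < 0 \<and> is_eigenvalue A (complex_of_real t)}"
  define f where "f t = 1 / (t - a)" for t
  have TSa: "t > a" if "t \<in> TS" for t using eig_ge that a_mu unfolding TS_def by force
  have inj: "inj_on f TS"
  proof (rule inj_onI)
    fix t1 t2 assume "t1 \<in> TS" "t2 \<in> TS" "f t1 = f t2"
    then have "inverse (t1 - a) = inverse (t2 - a)" unfolding f_def by (simp add: inverse_eq_divide)
    then have "t1 - a = t2 - a" by (rule inverse_eq_imp_eq)
    then show "t1 = t2" by simp
  qed
  have img: "f ` TS = cspos.Sgt R (- 1 / a)"
  proof
    show "f ` TS \<subseteq> cspos.Sgt R (- 1 / a)"
    proof
      fix s assume "s \<in> f ` TS"
      then obtain t where t: "t \<in> TS" "s = f t" by blast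
      have ta: "t > a" "t < 0" using TSa t(1) unfolding TS_def by auto
      have "1 / (- a) < 1 / (t - a)"
      proof (rule divide_strict_left_mono)
        show "0 < (- a) * (t - a)" using ta by (intro mult_pos_pos) auto
      qed (use ta in auto)
      then have "- 1 / a < s" unfolding t(2) f_def by simp
      moreover have "cspos.espace R s \<noteq> {0}"
        using t(1) eig_link[OF ta(1)] unfolding TS_def is_eigenvalue_def t(2) f_def by simp
      ultimately show "s \<in> cspos.Sgt R (- 1 / a)" unfolding cspos.Sgt_def[OF R_cspos] by simp
    qed
    show "cspos.Sgt R (- 1 / a) \<subseteq> f ` TS"
    proof
      fix s assume "s \<in> cspos.Sgt R (- 1 / a)"
      then have s: "- 1 / a < s" "cspos.espace R s \<noteq> {0}" unfolding cspos.Sgt_def[OF R_cspos] by auto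
      have c0: "0 < - 1 / a" using a_neg by (simp add: divide_neg_neg)
      then have spos: "s > 0" using s(1) by linarith
      define t where "t = a + 1 / s"
      have ta: "t > a" unfolding t_def using spos by simp
      have ft: "f t = s" unfolding f_def t_def using spos by simp
      have "1 / s < - a"
      proof -
        have "1 / s < 1 / (- 1 / a)"
        proof (rule divide_strict_left_mono)
          show "0 < s * (- 1 / a)" using c0 spos by (intro mult_pos_pos)
        qed (use s(1) in auto)
        then show ?thesis using a_neg by simp
      qed
      then have "t < 0" unfolding t_def by simp
      moreover have "is_eigenvalue A (complex_of_real t)"
        unfolding is_eigenvalue_def eig_link[OF ta] using s(2) ft unfolding f_def by simp
      ultimately have "t \<in> TS" unfolding TS_def by simp
      then show "s \<in> f ` TS" using ft by (metis imageI)
    qed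
  qed
  have "(\<Sum>s\<in>cspos.Sgt R (- 1 / a). cvs.dim (cspos.espace R s)) = (\<Sum>t\<in>TS. cvs.dim (cspos.espace R (f t)))"
    unfolding img[symmetric] using sum.reindex[OF inj] by simp
  also have "\<dots> = (\<Sum>t\<in>TS. multiplicity_ev A (complex_of_real t))"
  proof (rule sum.cong[OF refl])
    fix t assume "t \<in> TS"
    then show "cvs.dim (cspos.espace R (f t)) = multiplicity_ev A (complex_of_real t)"
      unfolding multiplicity_ev_def f_def using eig_link[OF TSa] by simp
  qed
  finally show ?thesis unfolding TS_def by simp
qed

lemma Ri_bnd: "norm (resolvent A \<i> y) \<le> norm y"
proof -
  define v where "v = resolvent A \<i> y"
  have v: "v \<in> fst A" "snd A v - \<i> *\<^sub>C v = y" using res_in[OF Ri_bij] unfolding v_def by auto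
  have real: "Im (cinner (snd A v) v) = 0"
  proof -
    have "cinner (snd A v) v = cinner v (snd A v)" using symm[OF v(1) v(1)] .
    also have "\<dots> = cnj (cinner (snd A v) v)" by (rule cinner_commute)
    finally have "cinner (snd A v) v = cnj (cinner (snd A v) v)" .
    then show ?thesis by (metis cnj.simps(2) equal_neg_zero)
  qed
  have "(norm y)\<^sup>2 = (norm (snd A v))\<^sup>2 + (norm (\<i> *\<^sub>C v))\<^sup>2 - 2 * Re (cinner (snd A v) (\<i> *\<^sub>C v))"
    unfolding v(2)[symmetric] by (rule norm_diff_sq)
  also have "Re (cinner (snd A v) (\<i> *\<^sub>C v)) = 0" using real by (simp add: cinner_scaleC_right)
  also have "norm (\<i> *\<^sub>C v) = norm v" by (simp add: norm_scaleC)
  finally have "(norm v)\<^sup>2 \<le> (norm y)\<^sup>2" by simp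
  then show ?thesis unfolding v_def by (rule power2_le_imp_le) simp
qed

lemma Ri_bl: "bounded_linear (resolvent A \<i>)"
  by (rule bounded_linear_intro[of _ 1])
     (auto simp: cpair.linear_add[OF Ri_lin] cpair.linear_scale[OF Ri_lin] scaleR_scaleC Ri_bnd)

end

lemma R_diff_bound:
  assumes S0: "sa_op A0 \<mu> a" and S1: "sa_op A1 \<mu> a"
  defines "M \<equiv> 1 + cmod (complex_of_real a - \<i>) / (\<mu> - a)"
  shows "norm (sa_op.R A1 a y - sa_op.R A0 a y)
           \<le> M * M * onorm (\<lambda>x. resolvent A1 \<i> x - resolvent A0 \<i> x) * norm y"
proof -
  interpret s0: sa_op A0 \<mu> a by (rule S0)
  interpret s1: sa_op A1 \<mu> a by (rule S1)
  define k where "k = complex_of_real a - \<i>"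
  define S0 where "S0 w = w + k *\<^sub>C s0.R w" for w
  define S1 where "S1 w = w + k *\<^sub>C s1.R w" for w
  have Mbnd0: "norm (S0 w) \<le> M * norm w" for w
  proof -
    have "norm (S0 w) \<le> norm w + cmod k * norm (s0.R w)"
      unfolding S0_def using norm_triangle_ineq[of w "k *\<^sub>C s0.R w"] by (simp add: norm_scaleC)
    also have "\<dots> \<le> norm w + cmod k * ((1 / (\<mu> - a)) * norm w)"
      by (intro add_left_mono mult_left_mono s0.R_bnd) simp
    finally show ?thesis unfolding M_def k_def by (simp add: algebra_simps)
  qed
  have Mbnd1: "norm (S1 w) \<le> M * norm w" for w
  proof -
    have "norm (S1 w) \<le> norm w + cmod k * norm (s1.R w)"
      unfolding S1_def using norm_triangle_ineq[of w "k *\<^sub>C s1.R w"] by (simp add: norm_scaleC)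
    also have "\<dots> \<le> norm w + cmod k * ((1 / (\<mu> - a)) * norm w)"
      by (intro add_left_mono mult_left_mono s1.R_bnd) simp
    finally show ?thesis unfolding M_def k_def by (simp add: algebra_simps)
  qed
  have S1diff: "S1 (p - q) = S1 p - S1 q" for p q
    unfolding S1_def using cpair.linear_diff[OF s1.R_lin] cpair.linear_scale[OF s1.R_lin]
    by (simp add: scaleC_diff_right)
  define u where "u = S0 y"
  have e1: "S1 (resolvent A1 \<i> u) = s1.R y + k *\<^sub>C s1.R (s0.R y)"
  proof -
    have "S1 (resolvent A1 \<i> u) = s1.R u" unfolding S1_def k_def using s1.Ri_via_R[of u] by simp
    also have "\<dots> = s1.R y + k *\<^sub>C s1.R (s0.R y)"
      unfolding u_def S0_def using cpair.linear_add[OF s1.R_lin] cpair.linear_scale[OF s1.R_lin] by simp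
    finally show ?thesis .
  qed
  have e2: "S1 (resolvent A0 \<i> u) = s0.R y + k *\<^sub>C s1.R (s0.R y)"
  proof -
    have "resolvent A0 \<i> u = s0.R y" unfolding u_def S0_def k_def by (rule s0.R_via_Ri)
    then show ?thesis unfolding S1_def by simp
  qed
  have "s1.R y - s0.R y = S1 (resolvent A1 \<i> u - resolvent A0 \<i> u)" unfolding S1diff e1 e2 by simp
  then have "norm (s1.R y - s0.R y) \<le> M * norm (resolvent A1 \<i> u - resolvent A0 \<i> u)"
    using Mbnd1 by simp
  also have "\<dots> \<le> M * (onorm (\<lambda>x. resolvent A1 \<i> x - resolvent A0 \<i> x) * norm u)"
  proof (rule mult_left_mono)
    show "norm (resolvent A1 \<i> u - resolvent A0 \<i> u) \<le> onorm (\<lambda>x. resolvent A1 \<i> x - resolvent A0 \<i> x) * norm u"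
      using onorm[OF bounded_linear_sub[OF s1.Ri_bl s0.Ri_bl], of u] by simp
    show "0 \<le> M" unfolding M_def using s0.a_mu by simp
  qed
  also have "\<dots> \<le> M * (onorm (\<lambda>x. resolvent A1 \<i> x - resolvent A0 \<i> x) * (M * norm y))"
  proof (intro mult_left_mono)
    show "norm u \<le> M * norm y" unfolding u_def by (rule Mbnd0)
    show "0 \<le> onorm (\<lambda>x. resolvent A1 \<i> x - resolvent A0 \<i> x)"
      by (rule onorm_pos_le[OF bounded_linear_sub[OF s1.Ri_bl s0.Ri_bl]])
    show "0 \<le> M" unfolding M_def using s0.a_mu by simp
  qed
  finally show ?thesis by (simp add: mult_ac)
qed

lemma form_close:
  fixes B0 B1 :: "'a::complex_inner \<Rightarrow> 'a"
  assumes "\<And>y. norm (B1 y - B0 y) \<le> C * norm y"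
  shows "\<bar>Re (cinner (B1 x) x) - Re (cinner (B0 x) x)\<bar> \<le> C * (norm x)\<^sup>2"
proof -
  have "\<bar>Re (cinner (B1 x) x) - Re (cinner (B0 x) x)\<bar> = \<bar>Re (cinner (B1 x - B0 x) x)\<bar>"
    by (simp add: cinner_diff_left)
  also have "\<dots> \<le> cmod (cinner (B1 x - B0 x) x)" by (rule abs_Re_le_cmod)
  also have "\<dots> \<le> norm (B1 x - B0 x) * norm x" by (rule cauchy_schwarz)
  also have "\<dots> \<le> C * norm x * norm x" by (intro mult_right_mono assms) simp
  finally show ?thesis by (simp add: power2_eq_square mult_ac)
qed

lemma dim_zero_space: "cvs.dim ({0} :: 'a::complex_inner set) = 0"
proof -
  have "cvs.span ({0} :: 'a set) = {0}" by (simp add: cvs.subspace_0)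
  then have "cvs.span ({} :: 'a set) = cvs.span {0}" by simp
  then show ?thesis using cvs.dim_eq_card[of "{}" "{0::'a}"] cvs.independent_empty by simp
qed

lemma mult_not_ev: "\<not> ev_F F l \<Longrightarrow> multiplicity_ev (F l) 0 = 0"
  unfolding ev_F_def is_eigenvalue_def multiplicity_ev_def using dim_zero_space by simp

lemma local_lemma:
  assumes SA: "standing_assumptions \<sigma> \<tau> F" and l0: "x0l \<in> ointerval \<sigma> \<tau>"
  shows "\<exists>d>0. \<forall>l\<in>ointerval \<sigma> \<tau>. \<bar>l - x0l\<bar> < d \<longrightarrow>
     nu_F F x0l \<le> nu_F F l \<and> nu_F F l \<le> nu_F F x0l + multiplicity_ev (F x0l) 0"
proof -
  define I where "I = ointerval \<sigma> \<tau>"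
  have A1: "\<And>l. l \<in> I \<Longrightarrow> self_adjoint (F l) \<and> compact_resolvent (F l)"
    using SA unfolding standing_assumptions_def I_def by blast
  obtain \<mu> U where U: "open U" "x0l \<in> U" "closure U \<subseteq> I" "\<forall>l1\<in>U. op_ge (F l1) \<mu>"
    using SA l0 unfolding standing_assumptions_def I_def by blast
  have A3: "((\<lambda>l. onorm (\<lambda>x. resolvent (F l) \<i> x - resolvent (F x0l) \<i> x)) \<longlongrightarrow> 0) (at x0l within I)"
    using SA l0 unfolding standing_assumptions_def I_def by blast
  define a where "a = min \<mu> 0 - 1"
  have UI: "U \<subseteq> I" using U(3) closure_subset by blast
  have SO: "sa_op (F l) \<mu> a" if "l \<in> U" for l
    using A1[of l] U(4) that UI unfolding a_def by (intro sa_op.intro) auto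
  interpret s0: sa_op "F x0l" \<mu> a by (rule SO[OF U(2)])
  have c: "- 1 / a > 0" using s0.a_neg by (simp add: divide_neg_neg)
  obtain \<delta> where dl: "\<delta> > 0" and P: "\<forall>B1 K1. cspos B1 K1 \<longrightarrow>
     (\<forall>x. \<bar>Re (cinner (B1 x) x) - Re (cinner (s0.R x) x)\<bar> \<le> \<delta> * (norm x)\<^sup>2) \<longrightarrow>
     (\<Sum>s\<in>cspos.Sgt s0.R (- 1 / a). cvs.dim (cspos.espace s0.R s)) \<le> (\<Sum>s\<in>cspos.Sgt B1 (- 1 / a). cvs.dim (cspos.espace B1 s)) \<and>
     (\<Sum>s\<in>cspos.Sgt B1 (- 1 / a). cvs.dim (cspos.espace B1 s)) \<le>
        (\<Sum>s\<in>cspos.Sgt s0.R (- 1 / a). cvs.dim (cspos.espace s0.R s)) + cvs.dim (cspos.espace s0.R (- 1 / a))"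
    using perturb[OF s0.R_cspos c] by blast
  define M where "M = 1 + cmod (complex_of_real a - \<i>) / (\<mu> - a)"
  have Mpos: "M > 0" unfolding M_def using s0.a_mu by (simp add: add_pos_nonneg)
  define e where "e = \<delta> / (M * M)"
  have epos: "e > 0" unfolding e_def using dl Mpos by simp
  have "\<forall>\<^sub>F l in at x0l within I. dist (onorm (\<lambda>x. resolvent (F l) \<i> x - resolvent (F x0l) \<i> x)) 0 < e"
    using A3 epos unfolding tendsto_iff by blast
  then obtain d1 where d1: "d1 > 0" "\<forall>l\<in>I. l \<noteq> x0l \<and> dist l x0l < d1 \<longrightarrow>
      dist (onorm (\<lambda>x. resolvent (F l) \<i> x - resolvent (F x0l) \<i> x)) 0 < e"
    unfolding eventually_at by blast
  obtain r where r: "r > 0" "ball x0l r \<subseteq> U" using U(1,2) open_contains_ball_eq by blast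
  define d where "d = min d1 r"
  have nuR: "nu_F F l = (\<Sum>s\<in>cspos.Sgt (sa_op.R (F l) a) (- 1 / a). cvs.dim (cspos.espace (sa_op.R (F l) a) s))"
    if "l \<in> U" for l
  proof -
    interpret s: sa_op "F l" \<mu> a by (rule SO[OF that])
    show ?thesis unfolding nu_F_def using s.nu_eq by simp
  qed
  have dpos: "d > 0" unfolding d_def using d1 r by simp
  have "\<forall>l\<in>ointerval \<sigma> \<tau>. \<bar>l - x0l\<bar> < d \<longrightarrow>
     nu_F F x0l \<le> nu_F F l \<and> nu_F F l \<le> nu_F F x0l + multiplicity_ev (F x0l) 0"
  proof (intro ballI impI)
    fix l assume l: "l \<in> ointerval \<sigma> \<tau>" "\<bar>l - x0l\<bar> < d"
    show "nu_F F x0l \<le> nu_F F l \<and> nu_F F l \<le> nu_F F x0l + multiplicity_ev (F x0l) 0"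
    proof (cases "l = x0l")
      case True then show ?thesis by simp
    next
      case False
      have lU: "l \<in> U" using l(2) r(2) unfolding d_def by (auto simp: dist_real_def)
      interpret s1: sa_op "F l" \<mu> a by (rule SO[OF lU])
      have "dist (onorm (\<lambda>x. resolvent (F l) \<i> x - resolvent (F x0l) \<i> x)) 0 < e"
        using d1(2) l False unfolding I_def d_def by (auto simp: dist_real_def)
      then have on: "onorm (\<lambda>x. resolvent (F l) \<i> x - resolvent (F x0l) \<i> x) \<le> e" by simp
      have "norm (s1.R y - s0.R y) \<le> \<delta> * norm y" for y
      proof -
        have "norm (s1.R y - s0.R y) \<le> M * M * onorm (\<lambda>x. resolvent (F l) \<i> x - resolvent (F x0l) \<i> x) * norm y"
          using R_diff_bound[OF SO[OF U(2)] SO[OF lU]] unfolding M_def by simp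
        also have "\<dots> \<le> M * M * e * norm y"
          using on Mpos by (intro mult_right_mono mult_left_mono) auto
        also have "M * M * e = \<delta>" unfolding e_def using Mpos by simp
        finally show ?thesis .
      qed
      then have cl: "\<forall>x. \<bar>Re (cinner (s1.R x) x) - Re (cinner (s0.R x) x)\<bar> \<le> \<delta> * (norm x)\<^sup>2"
        using form_close by blast
      have ineq: "(\<Sum>s\<in>cspos.Sgt s0.R (- 1 / a). cvs.dim (cspos.espace s0.R s)) \<le> (\<Sum>s\<in>cspos.Sgt s1.R (- 1 / a). cvs.dim (cspos.espace s1.R s)) \<and>
        (\<Sum>s\<in>cspos.Sgt s1.R (- 1 / a). cvs.dim (cspos.espace s1.R s)) \<le>
        (\<Sum>s\<in>cspos.Sgt s0.R (- 1 / a). cvs.dim (cspos.espace s0.R s)) + cvs.dim (cspos.espace s0.R (- 1 / a))"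
        using P s1.R_cspos cl by blast
      show ?thesis using ineq unfolding nuR[OF U(2)] nuR[OF lU] s0.mult0 .
    qed
  qed
  then show ?thesis using dpos by blast
qed

theorem theorem1:
  fixes \<sigma> \<tau> :: ereal and F :: "real \<Rightarrow> 'h::chilbert_space op" and \<xi>1 \<xi>2 :: real
  assumes "standing_assumptions \<sigma> \<tau> F"
    and "\<xi>1 < \<xi>2"
    and "{\<xi>1..\<xi>2} \<subseteq> ointerval \<sigma> \<tau>"
  shows "enat (nu_F F \<xi>2) \<le> N_F F \<xi>1 \<xi>2 + enat (nu_F F \<xi>1)"
proof -
  note SA = assms(1) and xi = assms(2) and JI = assms(3)
  define E where "E = {l\<in>{\<xi>1..<\<xi>2}. ev_F F l}"
  define m where "m l = multiplicity_ev (F l) 0" for l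
  show ?thesis
  proof (cases "finite E")
    case False
    then have "N_F F \<xi>1 \<xi>2 = \<infinity>" unfolding N_F_def E_def Let_def by simp
    then show ?thesis by simp
  next
    case finE: True
    have NF: "N_F F \<xi>1 \<xi>2 = enat (\<Sum>l\<in>E. m l)" unfolding N_F_def E_def Let_def m_def
      using finE unfolding E_def by simp
    define J where "J = {\<xi>1..\<xi>2}"
    define cnt where "cnt x = (\<Sum>l\<in>E \<inter> {..<x}. m l)" for x
    define g where "g x = int (nu_F F x) - int (cnt x)" for x
    have loc: "\<exists>d>0. \<forall>l\<in>J. \<bar>l - x\<bar> < d \<longrightarrow> nu_F F x \<le> nu_F F l \<and> nu_F F l \<le> nu_F F x + m x"
      if x: "x \<in> J" for x
    proof -
      have "x \<in> ointerval \<sigma> \<tau>" using x JI unfolding J_def by blast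
      from local_lemma[OF SA this] obtain d where
        "d > 0" "\<forall>l\<in>ointerval \<sigma> \<tau>. \<bar>l - x\<bar> < d \<longrightarrow>
          nu_F F x \<le> nu_F F l \<and> nu_F F l \<le> nu_F F x + multiplicity_ev (F x) 0" by blast
      then show ?thesis using JI unfolding J_def m_def by blast
    qed
    have Rstep: "\<exists>d>0. \<forall>l\<in>J. x < l \<and> l < x + d \<longrightarrow> g l \<le> g x" if x: "x \<in> J" for x
    proof -
      obtain d where d: "d > 0" "\<forall>l\<in>J. \<bar>l - x\<bar> < d \<longrightarrow> nu_F F x \<le> nu_F F l \<and> nu_F F l \<le> nu_F F x + m x"
        using loc[OF x] by blast
      have "g l \<le> g x" if l: "l \<in> J" "x < l" "l < x + d" for l
      proof -
        have nu: "nu_F F l \<le> nu_F F x + m x" using d(2) l by auto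
        have xin: "x \<in> {\<xi>1..<\<xi>2}" using x l unfolding J_def by auto
        have "cnt x + m x \<le> cnt l"
        proof (cases "x \<in> E")
          case True
          have "cnt x + m x = (\<Sum>l\<in>insert x (E \<inter> {..<x}). m l)"
            unfolding cnt_def using finE by (simp add: add.commute)
          also have "\<dots> \<le> cnt l" unfolding cnt_def
            using finE True l(2) by (intro sum_mono2) auto
          finally show ?thesis .
        next
          case False
          then have "\<not> ev_F F x" using xin unfolding E_def by blast
          then have "m x = 0" unfolding m_def by (rule mult_not_ev)
          moreover have "cnt x \<le> cnt l" unfolding cnt_def using finE l(2) by (intro sum_mono2) auto
          ultimately show ?thesis by simp
        qed
        then show ?thesis unfolding g_def using nu by linarith
      qed
      then show ?thesis using d(1) by blast
    qed
    have Lstep: "\<exists>d>0. \<forall>l\<in>J. x - d < l \<and> l < x \<longrightarrow> g x \<le> g l" if x: "x \<in> J" for x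
    proof -
      obtain d1 where d1: "d1 > 0" "\<forall>l\<in>J. \<bar>l - x\<bar> < d1 \<longrightarrow> nu_F F x \<le> nu_F F l \<and> nu_F F l \<le> nu_F F x + m x"
        using loc[OF x] by blast
      define P where "P = (\<lambda>e. x - e) ` (E \<inter> {..<x})"
      have finP: "finite P" unfolding P_def using finE by simp
      define d2 where "d2 = Min (insert 1 P)"
      have d2pos: "d2 > 0" unfolding d2_def using finP by (subst Min_gr_iff) (auto simp: P_def)
      have d2le: "d2 \<le> x - e" if "e \<in> E" "e < x" for e
        unfolding d2_def using finP that by (intro Min_le) (auto simp: P_def)
      define d where "d = min d1 d2"
      have "g x \<le> g l" if l: "l \<in> J" "x - d < l" "l < x" for l
      proof -
        have nu: "nu_F F x \<le> nu_F F l" using d1(2) l unfolding d_def by auto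
        have "E \<inter> {..<l} = E \<inter> {..<x}"
        proof
          show "E \<inter> {..<l} \<subseteq> E \<inter> {..<x}" using l(3) by auto
          show "E \<inter> {..<x} \<subseteq> E \<inter> {..<l}"
          proof
            fix e assume e: "e \<in> E \<inter> {..<x}"
            then have "d2 \<le> x - e" using d2le by auto
            then have "e < l" using l(2) unfolding d_def by linarith
            then show "e \<in> E \<inter> {..<l}" using e by auto
          qed
        qed
        then have "cnt l = cnt x" unfolding cnt_def by simp
        then show ?thesis unfolding g_def using nu by linarith
      qed
      moreover have "d > 0" unfolding d_def using d1(1) d2pos by simp
      ultimately show ?thesis by blast
    qed
    have x1J: "\<xi>1 \<in> J" unfolding J_def using xi by simp
    have main: "\<forall>x\<in>J. g x \<le> g \<xi>1"
    proof (rule ccontr)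
      assume "\<not> (\<forall>x\<in>J. g x \<le> g \<xi>1)"
      define Bad where "Bad = {x\<in>J. g \<xi>1 < g x}"
      have Bne: "Bad \<noteq> {}" using \<open>\<not> (\<forall>x\<in>J. g x \<le> g \<xi>1)\<close> unfolding Bad_def by force
      have Bbd: "bdd_below Bad" unfolding Bad_def J_def by (rule bdd_belowI[of _ \<xi>1]) auto
      define b where "b = Inf Bad"
      have blow: "b \<le> y" if "y \<in> Bad" for y unfolding b_def using that Bbd by (rule cInf_lower)
      have bge: "\<xi>1 \<le> b" unfolding b_def using Bne by (rule cInf_greatest) (auto simp: Bad_def J_def)
      obtain y0 where "y0 \<in> Bad" using Bne by blast
      then have ble: "b \<le> \<xi>2" using blow[of y0] unfolding Bad_def J_def by auto
      have bJ: "b \<in> J" unfolding J_def using bge ble by simp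
      show False
      proof (cases "b \<in> Bad")
        case True
        then have "b \<noteq> \<xi>1" unfolding Bad_def by auto
        then have bgt: "\<xi>1 < b" using bge by simp
        obtain d where d: "d > 0" "\<forall>l\<in>J. b - d < l \<and> l < b \<longrightarrow> g b \<le> g l" using Lstep[OF bJ] by blast
        define l where "l = max \<xi>1 (b - d / 2)"
        have lJ: "l \<in> J" unfolding l_def J_def using bgt ble d(1) by auto
        have "b - d < l" "l < b" unfolding l_def using bgt d(1) by auto
        then have "g b \<le> g l" using d(2) lJ by blast
        then have "l \<in> Bad" using True lJ unfolding Bad_def by auto
        then have "b \<le> l" by (rule blow)
        then show False using \<open>l < b\<close> by simp
      next
        case False
        then have gb: "g b \<le> g \<xi>1" using bJ unfolding Bad_def by auto
        obtain d where d: "d > 0" "\<forall>l\<in>J. b < l \<and> l < b + d \<longrightarrow> g l \<le> g b" using Rstep[OF bJ] by blast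
        have "Inf Bad < b + d" using d(1) unfolding b_def by simp
        then obtain y where y: "y \<in> Bad" "y < b + d" using cInf_less_iff[OF Bne Bbd] by blast
        have "b \<le> y" using blow[OF y(1)] .
        moreover have "y \<noteq> b" using y(1) False by blast
        ultimately have "b < y" by simp
        moreover have yJ: "y \<in> J" using y(1) unfolding Bad_def by blast
        ultimately have "g y \<le> g b" using d(2) y(2) by blast
        then show False using gb y(1) unfolding Bad_def by simp
      qed
    qed
    have x2J: "\<xi>2 \<in> J" unfolding J_def using xi by simp
    have c1: "cnt \<xi>1 = 0"
    proof -
      have "E \<inter> {..<\<xi>1} = {}" unfolding E_def by auto
      then show ?thesis unfolding cnt_def by simp
    qed
    have c2: "cnt \<xi>2 = (\<Sum>l\<in>E. m l)"
    proof -
      have "E \<inter> {..<\<xi>2} = E" unfolding E_def by auto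
      then show ?thesis unfolding cnt_def by simp
    qed
    have "g \<xi>2 \<le> g \<xi>1" using main x2J by blast
    then have "nu_F F \<xi>2 \<le> (\<Sum>l\<in>E. m l) + nu_F F \<xi>1" unfolding g_def c1 c2 by linarith
    then show ?thesis unfolding NF by simp
  qed
qed

end
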